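(* Let $P$ and $Q$ be unital associative algebras over a field $k$ and let $\varphi\colon Q\to P$ be a morphism of unital algebras. Let $Z:=P\oplus Q$ be the mapping cylinder algebra (defined in the context), let $X$ be a right $P$-module and $Y$ a left $P$-module. Then for every $P$-bimodule $M$, regarded as a $Z$-bimodule via $(p,q)\cdot m=pm+\varphi(q)m$ and $m\cdot(p,q)=mp+m\varphi(q)$, one has $H_n(Z,M)\cong H_n(P,M)$ for all $n\geq 0$, where $H_*$ denotes Hochschild homology.
   Context: All algebras are unital associative $k$-algebras and tensor products are over $k$. The mapping cylinder algebra of $\varphi\colon Q\to P$ is the vector space $Z=P\oplus Q$ with multiplication $(p,q)\cdot(p',q')=(pp'+p\varphi(q')+\varphi(q)p',\,qq')$ and unit $(0,1)$. $H_n(A,M)$ denotes the Hochschild homology of an algebra $A$ with coefficients in an $A$-bimodule $M$. *)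

theory Defs
  imports Main "HOL.Vector_Spaces" "HOL-Library.Product_Plus"
begin

definition k_algebra ::
  "('k::field \<Rightarrow> 'a::ab_group_add \<Rightarrow> 'a) \<Rightarrow> ('a \<Rightarrow> 'a \<Rightarrow> 'a) \<Rightarrow> 'a \<Rightarrow> bool" where
  "k_algebra sm mul one \<longleftrightarrow>
     vector_space sm \<and>
     (\<forall>x y z. mul (mul x y) z = mul x (mul y z)) \<and>
     (\<forall>x. mul one x = x \<and> mul x one = x) \<and>
     (\<forall>x y z. mul x (y + z) = mul x y + mul x z \<and> mul (x + y) z = mul x z + mul y z) \<and>
     (\<forall>c x y. mul (sm c x) y = sm c (mul x y) \<and> mul x (sm c y) = sm c (mul x y))"

definition alg_hom ::
  "('k::field \<Rightarrow> 'q::ab_group_add \<Rightarrow> 'q) \<Rightarrow> ('q \<Rightarrow> 'q \<Rightarrow> 'q) \<Rightarrow> 'q \<Rightarrow>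
   ('k \<Rightarrow> 'p::ab_group_add \<Rightarrow> 'p) \<Rightarrow> ('p \<Rightarrow> 'p \<Rightarrow> 'p) \<Rightarrow> 'p \<Rightarrow> ('q \<Rightarrow> 'p) \<Rightarrow> bool" where
  "alg_hom smQ mulQ oneQ smP mulP oneP f \<longleftrightarrow>
     (\<forall>x y. f (x + y) = f x + f y) \<and>
     (\<forall>c x. f (smQ c x) = smP c (f x)) \<and>
     (\<forall>x y. f (mulQ x y) = mulP (f x) (f y)) \<and>
     f oneQ = oneP"

definition k_bimodule ::
  "('k::field \<Rightarrow> 'a::ab_group_add \<Rightarrow> 'a) \<Rightarrow> ('a \<Rightarrow> 'a \<Rightarrow> 'a) \<Rightarrow> 'a \<Rightarrow>
   ('k \<Rightarrow> 'm::ab_group_add \<Rightarrow> 'm) \<Rightarrow> ('a \<Rightarrow> 'm \<Rightarrow> 'm) \<Rightarrow> ('m \<Rightarrow> 'a \<Rightarrow> 'm) \<Rightarrow> bool" where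
  "k_bimodule smA mulA oneA smM l r \<longleftrightarrow>
     vector_space smM \<and>
     (\<forall>a b m. l (a + b) m = l a m + l b m) \<and> (\<forall>a m n. l a (m + n) = l a m + l a n) \<and>
     (\<forall>a b m. r m (a + b) = r m a + r m b) \<and> (\<forall>a m n. r (m + n) a = r m a + r n a) \<and>
     (\<forall>a b m. l (mulA a b) m = l a (l b m)) \<and> (\<forall>m. l oneA m = m) \<and>
     (\<forall>a b m. r m (mulA a b) = r (r m a) b) \<and> (\<forall>m. r m oneA = m) \<and>
     (\<forall>a b m. l a (r m b) = r (l a m) b) \<and>
     (\<forall>c a m. l (smA c a) m = smM c (l a m) \<and> l a (smM c m) = smM c (l a m)) \<and>
     (\<forall>c a m. r m (smA c a) = smM c (r m a) \<and> r (smM c m) a = smM c (r m a))"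

definition cyl_mul ::
  "('q \<Rightarrow> 'p::ab_group_add) \<Rightarrow> ('p \<Rightarrow> 'p \<Rightarrow> 'p) \<Rightarrow> ('q \<Rightarrow> 'q \<Rightarrow> 'q) \<Rightarrow> 'p \<times> 'q \<Rightarrow> 'p \<times> 'q \<Rightarrow> 'p \<times> 'q" where
  "cyl_mul phi mulP mulQ z z' =
     (case z of (p, q) \<Rightarrow> case z' of (p', q') \<Rightarrow>
        (mulP p p' + mulP p (phi q') + mulP (phi q) p', mulQ q q'))"

definition cyl_one :: "'q \<Rightarrow> 'p::zero \<times> 'q" where
  "cyl_one oneQ = (0, oneQ)"

definition cyl_smul :: "('k \<Rightarrow> 'p \<Rightarrow> 'p) \<Rightarrow> ('k \<Rightarrow> 'q \<Rightarrow> 'q) \<Rightarrow> 'k \<Rightarrow> 'p \<times> 'q \<Rightarrow> 'p \<times> 'q" where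
  "cyl_smul smP smQ c z = (case z of (p, q) \<Rightarrow> (smP c p, smQ c q))"

definition cyl_lact :: "('q \<Rightarrow> 'p) \<Rightarrow> ('p \<Rightarrow> 'm::plus \<Rightarrow> 'm) \<Rightarrow> 'p \<times> 'q \<Rightarrow> 'm \<Rightarrow> 'm" where
  "cyl_lact phi l z m = (case z of (p, q) \<Rightarrow> l p m + l (phi q) m)"

definition cyl_ract :: "('q \<Rightarrow> 'p) \<Rightarrow> ('m::plus \<Rightarrow> 'p \<Rightarrow> 'm) \<Rightarrow> 'm \<Rightarrow> 'p \<times> 'q \<Rightarrow> 'm" where
  "cyl_ract phi r m z = (case z of (p, q) \<Rightarrow> r m p + r m (phi q))"

text \<open>Free k-vector space on pairs (m, [a1,...,an]) = finitely supported functions;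
  the tensor product M \<otimes> A^{\<otimes> n} is its quotient by the k-span of the multilinearity relations.\<close>

definition gen :: "'x \<Rightarrow> 'x \<Rightarrow> 'k::zero_neq_one" where
  "gen t = (\<lambda>s. if s = t then 1 else 0)"

inductive_set kspan :: "('x \<Rightarrow> 'k::field) set \<Rightarrow> ('x \<Rightarrow> 'k) set" for G where
  kspan_zero: "(\<lambda>s. 0) \<in> kspan G"
| kspan_step: "g \<in> G \<Longrightarrow> v \<in> kspan G \<Longrightarrow> (\<lambda>s. c * g s + v s) \<in> kspan G"

definition hchains :: "nat \<Rightarrow> ('m \<times> 'a list \<Rightarrow> 'k::zero) set" where
  "hchains n = {f. finite {t. f t \<noteq> 0} \<and> (\<forall>m as. f (m, as) \<noteq> 0 \<longrightarrow> length as = n)}"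

definition hrelgens ::
  "('k::field \<Rightarrow> 'a::ab_group_add \<Rightarrow> 'a) \<Rightarrow> ('k \<Rightarrow> 'm::ab_group_add \<Rightarrow> 'm) \<Rightarrow> nat \<Rightarrow>
   ('m \<times> 'a list \<Rightarrow> 'k) set" where
  "hrelgens smA smM n =
     {g. \<exists>m m' as. length as = n \<and>
          g = (\<lambda>s. gen (m + m', as) s - gen (m, as) s - gen (m', as) s)} \<union>
     {g. \<exists>c m as. length as = n \<and>
          g = (\<lambda>s. gen (smM c m, as) s - c * gen (m, as) s)} \<union>
     {g. \<exists>m as i x y. length as = n \<and> i < n \<and>
          g = (\<lambda>s. gen (m, as[i := x + y]) s - gen (m, as[i := x]) s - gen (m, as[i := y]) s)} \<union>
     {g. \<exists>m as i c x. length as = n \<and> i < n \<and>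
          g = (\<lambda>s. gen (m, as[i := smA c x]) s - c * gen (m, as[i := x]) s)}"

definition hbgen ::
  "('a \<Rightarrow> 'a \<Rightarrow> 'a) \<Rightarrow> ('a \<Rightarrow> 'm \<Rightarrow> 'm) \<Rightarrow> ('m \<Rightarrow> 'a \<Rightarrow> 'm) \<Rightarrow> 'm \<times> 'a list \<Rightarrow>
   'm \<times> 'a list \<Rightarrow> 'k::field" where
  "hbgen mulA l r t = (case t of (m, as) \<Rightarrow>
     (if length as = 0 then (\<lambda>s. 0) else
      (\<lambda>s. gen (r m (hd as), tl as) s
         + (\<Sum>i\<in>{1..<length as}. (-1) ^ i *
              gen (m, take (i - 1) as @ [mulA (as ! (i - 1)) (as ! i)] @ drop (i + 1) as) s)
         + (-1) ^ length as * gen (l (last as) m, butlast as) s)))"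

definition hbd ::
  "('a \<Rightarrow> 'a \<Rightarrow> 'a) \<Rightarrow> ('a \<Rightarrow> 'm \<Rightarrow> 'm) \<Rightarrow> ('m \<Rightarrow> 'a \<Rightarrow> 'm) \<Rightarrow>
   ('m \<times> 'a list \<Rightarrow> 'k::field) \<Rightarrow> 'm \<times> 'a list \<Rightarrow> 'k" where
  "hbd mulA l r f = (\<lambda>s. \<Sum>t\<in>{t. f t \<noteq> 0}. f t * hbgen mulA l r t s)"

text \<open>Cycles and boundaries, lifted to the free space: x is a cycle iff b x \<in> relations,
  boundaries = relations + image of b. Their quotient is H_n(A, M).\<close>
definition hcycles ::
  "('k::field \<Rightarrow> 'a::ab_group_add \<Rightarrow> 'a) \<Rightarrow> ('a \<Rightarrow> 'a \<Rightarrow> 'a) \<Rightarrow> ('k \<Rightarrow> 'm::ab_group_add \<Rightarrow> 'm) \<Rightarrow>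
   ('a \<Rightarrow> 'm \<Rightarrow> 'm) \<Rightarrow> ('m \<Rightarrow> 'a \<Rightarrow> 'm) \<Rightarrow> nat \<Rightarrow> ('m \<times> 'a list \<Rightarrow> 'k) set" where
  "hcycles smA mulA smM l r n =
     {x \<in> hchains n. hbd mulA l r x \<in> kspan (hrelgens smA smM (n - 1))}"

definition hboundaries ::
  "('k::field \<Rightarrow> 'a::ab_group_add \<Rightarrow> 'a) \<Rightarrow> ('a \<Rightarrow> 'a \<Rightarrow> 'a) \<Rightarrow> ('k \<Rightarrow> 'm::ab_group_add \<Rightarrow> 'm) \<Rightarrow>
   ('a \<Rightarrow> 'm \<Rightarrow> 'm) \<Rightarrow> ('m \<Rightarrow> 'a \<Rightarrow> 'm) \<Rightarrow> nat \<Rightarrow> ('m \<times> 'a list \<Rightarrow> 'k) set" where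
  "hboundaries smA mulA smM l r n =
     {(\<lambda>s. u s + hbd mulA l r y s) | u y.
        u \<in> kspan (hrelgens smA smM n) \<and> y \<in> hchains (Suc n)}"

definition coset :: "('x \<Rightarrow> 'k::plus) set \<Rightarrow> ('x \<Rightarrow> 'k) \<Rightarrow> ('x \<Rightarrow> 'k) set" where
  "coset B x = {(\<lambda>s. x s + b s) | b. b \<in> B}"

definition hochschild_homology ::
  "('k::field \<Rightarrow> 'a::ab_group_add \<Rightarrow> 'a) \<Rightarrow> ('a \<Rightarrow> 'a \<Rightarrow> 'a) \<Rightarrow> ('k \<Rightarrow> 'm::ab_group_add \<Rightarrow> 'm) \<Rightarrow>
   ('a \<Rightarrow> 'm \<Rightarrow> 'm) \<Rightarrow> ('m \<Rightarrow> 'a \<Rightarrow> 'm) \<Rightarrow> nat \<Rightarrow> ('m \<times> 'a list \<Rightarrow> 'k) set set" where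
  "hochschild_homology smA mulA smM l r n =
     (coset (hboundaries smA mulA smM l r n)) ` (hcycles smA mulA smM l r n)"

text \<open>k-linear isomorphism between H_n(A,M) and H_n(A',M'): a bijection of the sets of cosets
  compatible with the induced vector space operations (c[x] + [y] = [c x + y]).\<close>
definition hochschild_iso ::
  "('k::field \<Rightarrow> 'a::ab_group_add \<Rightarrow> 'a) \<Rightarrow> ('a \<Rightarrow> 'a \<Rightarrow> 'a) \<Rightarrow> ('k \<Rightarrow> 'm::ab_group_add \<Rightarrow> 'm) \<Rightarrow>
   ('a \<Rightarrow> 'm \<Rightarrow> 'm) \<Rightarrow> ('m \<Rightarrow> 'a \<Rightarrow> 'm) \<Rightarrow>
   ('k \<Rightarrow> 'b::ab_group_add \<Rightarrow> 'b) \<Rightarrow> ('b \<Rightarrow> 'b \<Rightarrow> 'b) \<Rightarrow> ('k \<Rightarrow> 'n::ab_group_add \<Rightarrow> 'n) \<Rightarrow>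
   ('b \<Rightarrow> 'n \<Rightarrow> 'n) \<Rightarrow> ('n \<Rightarrow> 'b \<Rightarrow> 'n) \<Rightarrow> nat \<Rightarrow> bool" where
  "hochschild_iso smA mulA smM l r smB mulB smN l' r' n \<longleftrightarrow>
     (\<exists>F. bij_betw F (hochschild_homology smA mulA smM l r n)
                    (hochschild_homology smB mulB smN l' r' n) \<and>
        (\<forall>x \<in> hcycles smA mulA smM l r n. \<forall>y \<in> hcycles smA mulA smM l r n. \<forall>c.
           F (coset (hboundaries smA mulA smM l r n) (\<lambda>s. c * x s + y s)) =
           {(\<lambda>s. c * u s + v s) | u v.
              u \<in> F (coset (hboundaries smA mulA smM l r n) x) \<and>
              v \<in> F (coset (hboundaries smA mulA smM l r n) y)}))"

end

theory Submission
  imports Defs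
begin

definition Lin :: "('x \<Rightarrow> 'y \<Rightarrow> 'k::field) \<Rightarrow> ('x \<Rightarrow> 'k) \<Rightarrow> 'y \<Rightarrow> 'k" where
  "Lin G f = (\<lambda>s. \<Sum>t\<in>{t. f t \<noteq> 0}. f t * G t s)"

abbreviation fin :: "('x \<Rightarrow> 'k::zero) \<Rightarrow> bool" where
  "fin f \<equiv> finite {t. f t \<noteq> 0}"

lemma hbd_Lin: "hbd mulA l r = Lin (hbgen mulA l r)"
  by (simp add: hbd_def Lin_def fun_eq_iff)

lemma Lin_eq: assumes "finite S" "{t. f t \<noteq> 0} \<subseteq> S"
  shows "Lin G f s = (\<Sum>t\<in>S. f t * G t s)"
  unfolding Lin_def by (rule sum.mono_neutral_left[OF assms]) auto

lemma fin_lin: "fin f \<Longrightarrow> fin g \<Longrightarrow> fin (\<lambda>s. c * f s + (g s::'k::field))"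
  by (rule finite_subset[of _ "{t. f t \<noteq> 0} \<union> {t. g t \<noteq> 0}"]) auto

lemma fin_gen: "fin (gen t :: _ \<Rightarrow> 'k::field)"
  by (rule finite_subset[of _ "{t}"]) (auto simp: gen_def)

lemma fin_zero: "fin (\<lambda>s. 0::'k::field)" by simp

lemma Lin_lin:
  assumes "fin f" "fin g"
  shows "Lin G (\<lambda>s. c * f s + g s) = (\<lambda>s'. c * Lin G f s' + Lin G g s')"
proof
  fix s'
  let ?S = "{t. f t \<noteq> 0} \<union> {t. g t \<noteq> 0}"
  have fs: "finite ?S" using assms by auto
  have "Lin G (\<lambda>s. c * f s + g s) s' = (\<Sum>t\<in>?S. (c * f t + g t) * G t s')"
    by (rule Lin_eq[OF fs]) auto
  also have "\<dots> = c * (\<Sum>t\<in>?S. f t * G t s') + (\<Sum>t\<in>?S. g t * G t s')"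
    by (simp add: distrib_right sum.distrib sum_distrib_left mult.assoc)
  also have "\<dots> = c * Lin G f s' + Lin G g s'"
    by (simp add: Lin_eq[OF fs])
  finally show "Lin G (\<lambda>s. c * f s + g s) s' = c * Lin G f s' + Lin G g s'" .
qed

lemma Lin_zero: "Lin G (\<lambda>s. 0) = (\<lambda>s. 0)"
  by (simp add: Lin_def)

lemma Lin_gen: "Lin G (gen t) = G t"
proof
  fix s show "Lin G (gen t) s = G t s"
    by (subst Lin_eq[of "{t}"]) (auto simp: gen_def)
qed

lemma Lin_nz: "Lin G f s \<noteq> 0 \<Longrightarrow> \<exists>t. f t \<noteq> 0 \<and> G t s \<noteq> 0"
proof (rule ccontr)
  assume "Lin G f s \<noteq> 0" "\<not> (\<exists>t. f t \<noteq> 0 \<and> G t s \<noteq> 0)"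
  then have "(\<Sum>t | f t \<noteq> 0. f t * G t s) = 0" by (intro sum.neutral) auto
  then show False using \<open>Lin G f s \<noteq> 0\<close> unfolding Lin_def by simp
qed

lemma fin_Lin: assumes "fin f" "\<And>t. fin (G t)" shows "fin (Lin G f)"
proof (rule finite_subset)
  show "{s. Lin G f s \<noteq> 0} \<subseteq> (\<Union>t\<in>{t. f t \<noteq> 0}. {s. G t s \<noteq> 0})"
    using Lin_nz by fastforce
  show "finite (\<Union>t\<in>{t. f t \<noteq> 0}. {s. G t s \<noteq> 0})" using assms by auto
qed

lemma fin_induct[consumes 1, case_names zero step]:
  fixes f :: "'x \<Rightarrow> 'k::field"
  assumes "fin f" "P (\<lambda>s. 0)"
    "\<And>f c t. fin f \<Longrightarrow> P f \<Longrightarrow> P (\<lambda>s. c * gen t s + f s)"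
  shows "P f"
proof -
  have "\<And>f::'x\<Rightarrow>'k. {t. f t \<noteq> 0} = S \<Longrightarrow> P f" if "finite S" for S
    using that
  proof (induction S rule: finite_induct)
    case empty
    then have "f = (\<lambda>s. 0)" by (auto simp: fun_eq_iff)
    then show ?case using assms(2) by simp
  next
    case (insert t S)
    let ?f' = "f(t := 0)"
    have s': "{s. ?f' s \<noteq> 0} = S" using insert by auto
    have "P ?f'" using insert s' by blast
    moreover have "fin ?f'" using s' insert by simp
    moreover have "f = (\<lambda>s. f t * gen t s + ?f' s)" by (auto simp: gen_def)
    ultimately show ?case using assms(3)[of ?f' "f t" t] by simp
  qed
  then show ?thesis using assms(1) by blast
qed

lemma Lin_id: "fin f \<Longrightarrow> Lin gen f = f"
proof (induction f rule: fin_induct)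
  case zero then show ?case by (simp add: Lin_zero)
next
  case (step f c t)
  then show ?case by (simp add: Lin_lin fin_gen Lin_gen)
qed

lemma Lin_comp:
  assumes "fin f" "\<And>t. fin (G' t)"
  shows "Lin G (Lin G' f) = Lin (\<lambda>t. Lin G (G' t)) f"
  using assms(1)
proof (induction f rule: fin_induct)
  case zero then show ?case by (simp add: Lin_zero)
next
  case (step f c t)
  have "Lin G' (\<lambda>s. c * gen t s + f s) = (\<lambda>s. c * G' t s + Lin G' f s)"
    by (simp add: Lin_lin fin_gen step Lin_gen)
  then show ?case using step assms(2)
    by (simp add: Lin_lin fin_gen fin_Lin Lin_gen)
qed

lemma Lin_sum:
  assumes "finite I" "\<And>i. i \<in> I \<Longrightarrow> fin (v i)"
  shows "Lin G (\<lambda>s. \<Sum>i\<in>I. c i * v i s) = (\<lambda>s. \<Sum>i\<in>I. c i * Lin G (v i) s)"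
  using assms
proof (induction I rule: finite_induct)
  case empty then show ?case by (simp add: Lin_zero)
next
  case (insert i I)
  have f: "fin (\<lambda>s. \<Sum>i\<in>I. c i * v i s)"
  proof (rule finite_subset[of _ "\<Union>i\<in>I. {s. v i s \<noteq> 0}"])
    show "{s. (\<Sum>i\<in>I. c i * v i s) \<noteq> 0} \<subseteq> (\<Union>i\<in>I. {s. v i s \<noteq> 0})"
    proof
      fix x assume "x \<in> {s. (\<Sum>i\<in>I. c i * v i s) \<noteq> 0}"
      then have "(\<Sum>i\<in>I. c i * v i x) \<noteq> 0" by simp
      then obtain i' where "i' \<in> I" "c i' * v i' x \<noteq> 0"
        by (rule sum.not_neutral_contains_not_neutral)
      then show "x \<in> (\<Union>i\<in>I. {s. v i s \<noteq> 0})" by auto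
    qed
    show "finite (\<Union>i\<in>I. {s. v i s \<noteq> 0})" using insert.hyps insert.prems by simp
  qed
  have e: "(\<lambda>s. \<Sum>i\<in>insert i I. c i * v i s) = (\<lambda>s. c i * v i s + (\<Sum>i\<in>I. c i * v i s))"
    using insert.hyps by (simp add: fun_eq_iff)
  have vi: "fin (v i)" using insert.prems by simp
  have IH: "Lin G (\<lambda>s. \<Sum>i\<in>I. c i * v i s) = (\<lambda>s. \<Sum>i\<in>I. c i * Lin G (v i) s)"
    using insert.IH insert.prems by simp
  show ?case unfolding e Lin_lin[OF vi f] IH using insert.hyps by (simp add: fun_eq_iff)
qed

lemma Lin_diff: assumes "fin f" "fin g" shows "Lin G (\<lambda>s. f s - g s) = (\<lambda>s. Lin G f s - Lin G g s)"
proof -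
  have e: "(\<lambda>s. f s - g s) = (\<lambda>s. (-1) * g s + f s)" by (simp add: fun_eq_iff)
  show ?thesis unfolding e Lin_lin[OF assms(2,1)] by (simp add: fun_eq_iff)
qed

lemma Lin_smult: assumes "fin f" shows "Lin G (\<lambda>s. c * f s) = (\<lambda>s. c * Lin G f s)"
proof -
  have e: "(\<lambda>s. c * f s) = (\<lambda>s. c * f s + 0)" by simp
  show ?thesis unfolding e Lin_lin[OF assms fin_zero] Lin_zero by simp
qed

lemma kspan_lin: "u \<in> kspan G \<Longrightarrow> v \<in> kspan G \<Longrightarrow> (\<lambda>s. c * u s + v s) \<in> kspan G"
proof (induction u rule: kspan.induct)
  case kspan_zero then show ?case by simp
next
  case (kspan_step g u d)
  have "(\<lambda>s. c * (d * g s + u s) + v s) = (\<lambda>s. (c*d) * g s + (c * u s + v s))"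
    by (simp add: algebra_simps)
  then show ?case using kspan_step by (simp add: kspan.kspan_step)
qed

lemma kspan_gen: assumes "g \<in> G" shows "g \<in> kspan G"
proof -
  have "(\<lambda>s. 1 * g s + 0) \<in> kspan G" by (rule kspan.kspan_step[OF assms kspan.kspan_zero])
  then show ?thesis by simp
qed

lemma kspan_sum: "finite I \<Longrightarrow> (\<And>i. i \<in> I \<Longrightarrow> u i \<in> kspan G) \<Longrightarrow> (\<lambda>s. \<Sum>i\<in>I. c i * u i s) \<in> kspan G"
proof (induction I rule: finite_induct)
  case empty then show ?case by (simp add: kspan.kspan_zero)
next
  case (insert i I) then show ?case by (simp add: kspan_lin)
qed

lemma kspan_fin: assumes "\<And>g. g \<in> S \<Longrightarrow> fin g" "u \<in> kspan S" shows "fin u"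
  using assms(2) by (induction u rule: kspan.induct) (auto intro: fin_lin assms(1))

lemma kspan_Lin:
  assumes "u \<in> kspan S" "\<And>g. g \<in> S \<Longrightarrow> fin g" "\<And>g. g \<in> S \<Longrightarrow> Lin G g \<in> kspan S'"
  shows "Lin G u \<in> kspan S'"
  using assms(1)
proof (induction u rule: kspan.induct)
  case kspan_zero then show ?case by (simp add: Lin_zero kspan.kspan_zero)
next
  case (kspan_step g v c)
  have "fin v" using kspan_step(2) assms(2) kspan_fin by blast
  then show ?case using kspan_step assms by (simp add: Lin_lin kspan_lin)
qed

lemma hchains_fin: "x \<in> hchains n \<Longrightarrow> fin x"
  by (simp add: hchains_def)

lemma hchains_lin: fixes x y :: "_ \<Rightarrow> 'k::field"
  assumes "x \<in> hchains n" "y \<in> hchains n" shows "(\<lambda>s. c * x s + y s) \<in> hchains n"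
  unfolding hchains_def
proof (intro CollectI conjI allI impI)
  show "fin (\<lambda>s. c * x s + y s)" using assms by (intro fin_lin) (auto simp: hchains_def)
  fix m as assume "c * x (m, as) + y (m, as) \<noteq> 0"
  then have "x (m, as) \<noteq> 0 \<or> y (m, as) \<noteq> 0" by auto
  then show "length as = n" using assms unfolding hchains_def by blast
qed

lemma hchains_zero: "(\<lambda>s. 0) \<in> hchains n"
  by (simp add: hchains_def)

lemma hchains_gen: "length as = n \<Longrightarrow> gen (m, as) \<in> hchains n"
  unfolding hchains_def by (auto simp: fin_gen gen_def)

lemma Lin_hchains:
  assumes "f \<in> hchains n" "\<And>t. fin (G t)" "\<And>m as. length as = n \<Longrightarrow> G (m, as) \<in> hchains n'"
  shows "Lin G f \<in> hchains n'"
  unfolding hchains_def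
proof (intro CollectI conjI allI impI)
  have "fin f" using assms(1) by (rule hchains_fin)
  then show "fin (Lin G f)" using assms(2) by (rule fin_Lin)
  fix m as assume "Lin G f (m, as) \<noteq> 0"
  from Lin_nz[OF this] obtain t where t: "f t \<noteq> 0" "G t (m, as) \<noteq> 0" by blast
  obtain m' bs where tt: "t = (m', bs)" by (cases t)
  have "length bs = n" using assms(1) t(1) unfolding tt hchains_def by blast
  then have "G (m', bs) \<in> hchains n'" using assms(3) by blast
  then show "length as = n'" using t(2) unfolding tt hchains_def by blast
qed

lemma hchains_diff: fixes x y :: "_ \<Rightarrow> 'k::field" shows
  "x \<in> hchains n \<Longrightarrow> y \<in> hchains n \<Longrightarrow> (\<lambda>s. x s - y s) \<in> hchains n"
  using hchains_lin[of y n x "-1"] by simp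

lemma hchains_smult: fixes x :: "_ \<Rightarrow> 'k::field" shows
  "x \<in> hchains n \<Longrightarrow> (\<lambda>s. c * x s) \<in> hchains n"
  using hchains_lin[OF _ hchains_zero, of x n c] by simp

lemma hrelgens_hchains: assumes "g \<in> hrelgens smA smM n" shows "g \<in> hchains n"
  using assms unfolding hrelgens_def
proof (elim UnE CollectE exE conjE)
  fix m m' as assume "length as = n" "g = (\<lambda>s. gen (m + m', as) s - gen (m, as) s - gen (m', as) s)"
  then show ?thesis by (simp add: hchains_diff hchains_gen)
next
  fix c m as assume "length as = n" "g = (\<lambda>s. gen (smM c m, as) s - c * gen (m, as) s)"
  then show ?thesis by (simp add: hchains_diff hchains_gen hchains_smult)
next
  fix m as i x y assume "length as = n" "i < n" "g = (\<lambda>s. gen (m, as[i := x + y]) s - gen (m, as[i := x]) s - gen (m, as[i := y]) s)"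
  then show ?thesis by (simp add: hchains_diff hchains_gen)
next
  fix m as i c x assume "length as = n" "i < n" "g = (\<lambda>s. gen (m, as[i := smA c x]) s - c * gen (m, as[i := x]) s)"
  then show ?thesis by (simp add: hchains_diff hchains_gen hchains_smult)
qed

lemma kspan_hchains: "u \<in> kspan (hrelgens smA smM n) \<Longrightarrow> u \<in> hchains n"
  by (induction u rule: kspan.induct) (auto intro: hchains_zero hchains_lin hrelgens_hchains)


definition face :: "('a \<Rightarrow> 'a \<Rightarrow> 'a) \<Rightarrow> ('a \<Rightarrow> 'm \<Rightarrow> 'm) \<Rightarrow> ('m \<Rightarrow> 'a \<Rightarrow> 'm) \<Rightarrow> nat \<Rightarrow> 'm \<times> 'a list \<Rightarrow> 'm \<times> 'a list" where
  "face mul l r i t = (case t of (m, as) \<Rightarrow>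
     if i = 0 then (r m (hd as), tl as)
     else if i = length as then (l (last as) m, butlast as)
     else (m, take (i - 1) as @ [mul (as ! (i - 1)) (as ! i)] @ drop (i + 1) as))"

definition hop :: "('a \<Rightarrow> 'a) \<Rightarrow> 'a \<Rightarrow> nat \<Rightarrow> 'm \<times> 'a list \<Rightarrow> 'm \<times> 'a list" where
  "hop e E j t = (case t of (m, as) \<Rightarrow> (m, map e (take j as) @ [E] @ drop j as))"

lemma hbgen_face:
  assumes "as \<noteq> []"
  shows "hbgen mul l r (m, as) = (\<lambda>s. \<Sum>i\<in>{0..length as}. (-1)^i * gen (face mul l r i (m, as)) s)"
proof
  fix s
  let ?n = "length as"
  have n: "?n \<ge> 1" using assms by (cases as) auto
  have set: "{0..?n} = insert 0 (insert ?n {1..<?n})" using n by auto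
  have "(\<Sum>i\<in>{0..?n}. (-1)^i * gen (face mul l r i (m, as)) s :: 'k::field)
     = gen (face mul l r 0 (m, as)) s + ((-1)^?n * gen (face mul l r ?n (m, as)) s
        + (\<Sum>i\<in>{1..<?n}. (-1)^i * gen (face mul l r i (m, as)) s))"
    unfolding set using n by (subst sum.insert; auto)+
  also have "(\<Sum>i\<in>{1..<?n}. (-1)^i * gen (face mul l r i (m, as)) s) =
     (\<Sum>i\<in>{1..<?n}. (-1) ^ i * gen (m, take (i - 1) as @ [mul (as ! (i - 1)) (as ! i)] @ drop (i + 1) as) s)"
    by (rule sum.cong) (auto simp: face_def)
  also have "face mul l r 0 (m, as) = (r m (hd as), tl as)" by (simp add: face_def)
  also have "face mul l r ?n (m, as) = (l (last as) m, butlast as)" using assms by (simp add: face_def)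
  finally show "hbgen mul l r (m, as) s = (\<Sum>i\<in>{0..?n}. (-1)^i * gen (face mul l r i (m, as)) s)"
    using assms by (simp add: hbgen_def algebra_simps) (erule sym)
qed

lemma hbgen_nil: "hbgen mul l r (m, []) = (\<lambda>s. 0)"
  by (simp add: hbgen_def)

lemma simplicial_comb:
  fixes D E :: "nat \<Rightarrow> nat \<Rightarrow> 'v::comm_ring_1"
  assumes a: "\<And>i j. i < j \<Longrightarrow> j \<le> n \<Longrightarrow> D i j = E i (j - 1)"
    and b: "\<And>i j. j + 1 < i \<Longrightarrow> i \<le> n + 1 \<Longrightarrow> D i j = E (i - 1) j"
    and c: "\<And>i. 1 \<le> i \<Longrightarrow> i \<le> n \<Longrightarrow> D i i = D i (i - 1)"
  shows "(\<Sum>j\<in>{0..n}. (-1)^j * (\<Sum>i\<in>{0..n+1}. (-1)^i * D i j))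
       + (\<Sum>i\<in>{0..n}. (-1)^i * (\<Sum>j\<in>{0..<n}. (-1)^j * E i j)) = D 0 0 - D (n+1) n"
  using a b c
proof (induction n)
  case 0 then show ?case by simp
next
  case (Suc n)
  have IH: "(\<Sum>j\<in>{0..n}. (-1)^j * (\<Sum>i\<in>{0..n+1}. (-1)^i * D i j))
       + (\<Sum>i\<in>{0..n}. (-1)^i * (\<Sum>j\<in>{0..<n}. (-1)^j * E i j)) = D 0 0 - D (n+1) n"
    by (rule Suc.IH) (use Suc.prems in auto)
  have A: "(\<Sum>j\<in>{0..Suc n}. (-1)^j * (\<Sum>i\<in>{0..Suc n+1}. (-1)^i * D i j))
     = (\<Sum>j\<in>{0..n}. (-1)^j * (\<Sum>i\<in>{0..n+1}. (-1)^i * D i j))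
       + (\<Sum>j\<in>{0..n}. (-1)^j * ((-1)^(n+2) * D (n+2) j))
       + (-1)^(n+1) * ((\<Sum>i\<in>{0..n}. (-1)^i * D i (n+1)) + (-1)^(n+1) * D (n+1) (n+1)
            + (-1)^(n+2) * D (n+2) (n+1))"
  proof -
    have s1: "(\<Sum>i\<in>{0..Suc n + 1}. f i) = (\<Sum>i\<in>{0..n+1}. f i) + f (n+2)" for f :: "nat \<Rightarrow> 'v"
      by (simp add: numeral_2_eq_2)
    have s2: "(\<Sum>j\<in>{0..Suc n}. f j) = (\<Sum>j\<in>{0..n}. f j) + f (n+1)" for f :: "nat \<Rightarrow> 'v"
      by simp
    have s3: "(\<Sum>i\<in>{0..n+1}. f i) = (\<Sum>i\<in>{0..n}. f i) + f (n+1)" for f :: "nat \<Rightarrow> 'v"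
      by simp
    show ?thesis unfolding s1 s2 unfolding s3 by (simp only: distrib_left sum.distrib add.assoc)
  qed
  have B: "(\<Sum>i\<in>{0..Suc n}. (-1)^i * (\<Sum>j\<in>{0..<Suc n}. (-1)^j * E i j))
     = (\<Sum>i\<in>{0..n}. (-1)^i * (\<Sum>j\<in>{0..<n}. (-1)^j * E i j))
       + (\<Sum>i\<in>{0..n}. (-1)^i * ((-1)^n * E i n))
       + (-1)^(n+1) * (\<Sum>j\<in>{0..n}. (-1)^j * E (n+1) j)"
  proof -
    have s2: "(\<Sum>j\<in>{0..Suc n}. f j) = (\<Sum>j\<in>{0..n}. f j) + f (n+1)" for f :: "nat \<Rightarrow> 'v"
      by simp
    have s3: "(\<Sum>j\<in>{0..<Suc n}. f j) = (\<Sum>j\<in>{0..<n}. f j) + f n" for f :: "nat \<Rightarrow> 'v"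
      by simp
    have s4: "{0..<Suc n} = {0..n}" by auto
    have s5: "(\<Sum>j\<in>{0..n}. f j) = (\<Sum>j\<in>{0..<n}. f j) + f n" for f :: "nat \<Rightarrow> 'v"
      by (simp add: atLeastLessThanSuc_atLeastAtMost[symmetric])
    show ?thesis unfolding s2 unfolding s3 unfolding s5 by (simp only: distrib_left sum.distrib add_ac)
  qed
  have a1: "(\<Sum>i\<in>{0..n}. (-1)^i * D i (n+1)) = (\<Sum>i\<in>{0..n}. (-1)^i * E i n)"
    by (rule sum.cong) (use Suc.prems(1) in auto)
  have b1: "(\<Sum>j\<in>{0..n}. (-1)^j * ((-1)^(n+2) * D (n+2) j)) = (\<Sum>j\<in>{0..n}. (-1)^j * ((-1)^(n+2) * E (n+1) j))"
    by (rule sum.cong) (use Suc.prems(2) in auto)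
  have c1: "D (n+1) (n+1) = D (n+1) n" using Suc.prems(3)[of "n+1"] by simp
  show ?case
  proof -
    have p1: "(-1::'v)^(n+1) = - ((-1)^n)" by simp
    have p2: "(-1::'v)^(n+2) = (-1)^n" by simp
    have ss: "(-1::'v)^n * (-1)^n = 1" by (simp add: power_add[symmetric])
    have pull: "(\<Sum>j\<in>{0..n}. (-1)^j * (x * F j)) = x * (\<Sum>j\<in>{0..n}. (-1)^j * F j)" for x :: 'v and F
      by (simp add: sum_distrib_left mult.left_commute)
    show ?thesis
      unfolding A B a1 b1 c1 unfolding p1 p2 pull using IH
      by (simp add: algebra_simps ss)
  qed
qed


lemma face_0: "face mul l r 0 (m, a # as) = (r m a, as)"
  by (simp add: face_def)

lemma face_last: "i = Suc (length as) \<Longrightarrow> face mul l r i (m, as @ [a]) = (l a m, as)"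
  by (simp add: face_def)

lemma face_mid: "i = Suc (length us) \<Longrightarrow> face mul l r i (m, us @ a # b # vs) = (m, us @ mul a b # vs)"
  by (simp add: face_def nth_append)

lemma hop_split: "j = length xs \<Longrightarrow> hop e E j (m, xs @ ys) = (m, map e xs @ E # ys)"
  by (simp add: hop_def)

lemma split_at: "k \<le> length as \<Longrightarrow> \<exists>xs ys. as = xs @ ys \<and> length xs = k"
  by (rule exI[of _ "take k as"], rule exI[of _ "drop k as"]) simp

lemma split1: "k < length as \<Longrightarrow> \<exists>us a vs. as = us @ a # vs \<and> length us = k"
  by (rule exI[of _ "take k as"], rule exI[of _ "as ! k"], rule exI[of _ "drop (Suc k) as"])
     (simp add: Cons_nth_drop_Suc)

lemma split2: "Suc k < length as \<Longrightarrow> \<exists>us a b vs. as = us @ a # b # vs \<and> length us = k"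
  by (rule exI[of _ "take k as"], rule exI[of _ "as ! k"], rule exI[of _ "as ! Suc k"],
      rule exI[of _ "drop (Suc (Suc k)) as"]) (simp add: Cons_nth_drop_Suc)

lemma split_last: "as \<noteq> [] \<Longrightarrow> \<exists>xs a. as = xs @ [a]"
  by (rule exI[of _ "butlast as"], rule exI[of _ "last as"]) simp

locale simp_ids =
  fixes mul :: "'a \<Rightarrow> 'a \<Rightarrow> 'a" and l :: "'a \<Rightarrow> 'm \<Rightarrow> 'm" and r :: "'m \<Rightarrow> 'a \<Rightarrow> 'm"
    and e :: "'a \<Rightarrow> 'a" and E :: 'a
  assumes emul: "\<And>a b. e (mul a b) = mul (e a) (e b)"
    and eE: "\<And>a. mul (e a) E = e a"
    and Ea: "\<And>a. mul E a = e a"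
    and re: "\<And>m a. r m (e a) = r m a"
    and rE: "\<And>m. r m E = m"
    and lE: "\<And>m. l E m = m"
begin

abbreviation "fc \<equiv> face mul l r"
abbreviation "hp \<equiv> hop e E"

lemma id_a:
  assumes "length as = n" "i < j" "j \<le> n"
  shows "fc i (hp j (m, as)) = hp (j - 1) (fc i (m, as))"
proof (cases "i = 0")
  case True
  have "j \<le> length as" using assms by simp
  then obtain xs ys where d: "as = xs @ ys" "length xs = j" using split_at by blast
  obtain a xs' where x: "xs = a # xs'" using assms d True by (cases xs) auto
  have h1: "hp j (m, (a # xs') @ ys) = (m, map e (a # xs') @ E # ys)"
    by (rule hop_split) (use d x in simp)
  have h2: "hp (j - 1) (r m a, xs' @ ys) = (r m a, map e xs' @ E # ys)"
    by (rule hop_split) (use d x in simp)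
  show ?thesis using d x True h1 h2 by (simp add: face_0 re)
next
  case False
  have "Suc (i - 1) < length as" using assms False by simp
  then obtain us a b vs where d: "as = us @ a # b # vs" "length us = i - 1"
    using split2 by blast
  have "j - i - 1 \<le> length vs" using assms d False by simp
  then obtain ws zs where d2: "vs = ws @ zs" "length ws = j - i - 1"
    using split_at by blast
  have h1: "hp j (m, (us @ a # b # ws) @ zs) = (m, map e (us @ a # b # ws) @ E # zs)"
    by (rule hop_split) (use d d2 assms False in simp)
  have f1: "fc i (m, us @ a # b # (ws @ zs)) = (m, us @ mul a b # ws @ zs)"
    by (rule face_mid) (use d False in simp)
  have h2: "hp (j - 1) (m, (us @ mul a b # ws) @ zs) = (m, map e (us @ mul a b # ws) @ E # zs)"
    by (rule hop_split) (use d d2 assms False in simp)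
  have f2: "fc i (m, map e us @ e a # e b # (map e ws @ E # zs)) = (m, map e us @ mul (e a) (e b) # map e ws @ E # zs)"
    by (rule face_mid) (use d False in simp)
  show ?thesis using h1 f1 h2 f2 d d2 by (simp add: emul)
qed

lemma id_b:
  assumes "length as = n" "j + 1 < i" "i \<le> n + 1"
  shows "fc i (hp j (m, as)) = hp j (fc (i - 1) (m, as))"
proof (cases "i = n + 1")
  case True
  have "j \<le> length as" using assms by simp
  then obtain xs ys where d: "as = xs @ ys" "length xs = j" using split_at by blast
  have "ys \<noteq> []" using d assms by auto
  then obtain ys' a where y: "ys = ys' @ [a]" using split_last by blast
  have h1: "hp j (m, xs @ (ys' @ [a])) = (m, map e xs @ E # ys' @ [a])"
    by (rule hop_split) (use d in simp)
  have f1: "fc i (m, (map e xs @ E # ys') @ [a]) = (l a m, map e xs @ E # ys')"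
    by (rule face_last) (use d y assms True in simp)
  have f2: "fc (i - 1) (m, (xs @ ys') @ [a]) = (l a m, xs @ ys')"
    by (rule face_last) (use d y assms True in simp)
  have h2: "hp j (l a m, xs @ ys') = (l a m, map e xs @ E # ys')"
    by (rule hop_split) (use d in simp)
  show ?thesis using h1 f1 f2 h2 d y by simp
next
  case False
  have "j \<le> length as" using assms by simp
  then obtain xs ys where d: "as = xs @ ys" "length xs = j" using split_at by blast
  have "Suc (i - 2 - j) < length ys" using assms d False by simp
  then obtain ws a b vs where d2: "ys = ws @ a # b # vs" "length ws = i - 2 - j"
    using split2 by blast
  have h1: "hp j (m, xs @ (ws @ a # b # vs)) = (m, map e xs @ E # ws @ a # b # vs)"
    by (rule hop_split) (use d in simp)
  have f1: "fc i (m, (map e xs @ E # ws) @ a # b # vs) = (m, (map e xs @ E # ws) @ mul a b # vs)"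
    by (rule face_mid) (use d d2 assms in simp)
  have f2: "fc (i - 1) (m, (xs @ ws) @ a # b # vs) = (m, (xs @ ws) @ mul a b # vs)"
    by (rule face_mid) (use d d2 assms in simp)
  have h2: "hp j (m, xs @ (ws @ mul a b # vs)) = (m, map e xs @ E # ws @ mul a b # vs)"
    by (rule hop_split) (use d in simp)
  show ?thesis using h1 f1 f2 h2 d d2 by simp
qed

lemma id_c:
  assumes "length as = n" "1 \<le> i" "i \<le> n"
  shows "fc i (hp i (m, as)) = fc i (hp (i - 1) (m, as))"
proof -
  have "i - 1 < length as" using assms by simp
  then obtain xs a ys where d: "as = xs @ a # ys" "length xs = i - 1"
    using split1 by blast
  have h1: "hp i (m, as) = (m, map e xs @ e a # E # ys)" using d assms by (simp add: hop_def)
  have h2: "hp (i - 1) (m, as) = (m, map e xs @ E # a # ys)" using d assms by (simp add: hop_def)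
  have f1: "fc i (m, map e xs @ e a # E # ys) = (m, map e xs @ mul (e a) E # ys)"
    by (rule face_mid) (use d assms in simp)
  have f2: "fc i (m, map e xs @ E # a # ys) = (m, map e xs @ mul E a # ys)"
    by (rule face_mid) (use d assms in simp)
  show ?thesis using h1 h2 f1 f2 by (simp add: eE Ea)
qed

lemma id_d: "fc 0 (hp 0 (m, as)) = (m, as)"
  by (simp add: hop_def face_0 rE)

lemma id_e: assumes "length as = n" shows "fc (n + 1) (hp n (m, as)) = (m, map e as)"
proof -
  have "hp n (m, as) = (m, map e as @ [E])" using assms by (simp add: hop_def)
  moreover have "fc (n + 1) (m, map e as @ [E]) = (l E m, map e as)"
    by (rule face_last) (use assms in simp)
  ultimately show ?thesis by (simp add: lE)
qed

end


definition sub :: "('x \<Rightarrow> 'k::field) set \<Rightarrow> bool" where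
  "sub B \<longleftrightarrow> (\<lambda>s. 0) \<in> B \<and> (\<forall>x\<in>B. \<forall>y\<in>B. \<forall>c. (\<lambda>s. c * x s + y s) \<in> B)"

lemma sub_lin: "sub B \<Longrightarrow> x \<in> B \<Longrightarrow> y \<in> B \<Longrightarrow> (\<lambda>s. c * x s + y s) \<in> B"
  by (simp add: sub_def)

lemma sub_zero: "sub B \<Longrightarrow> (\<lambda>s. 0) \<in> B"
  by (simp add: sub_def)

lemma sub_diff: "sub B \<Longrightarrow> x \<in> B \<Longrightarrow> y \<in> B \<Longrightarrow> (\<lambda>s. x s - y s) \<in> B"
  using sub_lin[of B y x "-1"] by simp

lemma sub_add: "sub B \<Longrightarrow> x \<in> B \<Longrightarrow> y \<in> B \<Longrightarrow> (\<lambda>s. x s + y s) \<in> B"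
  using sub_lin[of B x y 1] by simp

lemma sub_kspan: "sub (kspan G)"
  unfolding sub_def by (auto intro: kspan_lin kspan.kspan_zero)

lemma coset_memI: "b \<in> B \<Longrightarrow> z = (\<lambda>s. x s + b s) \<Longrightarrow> z \<in> coset B x"
  unfolding coset_def by (intro CollectI exI[of _ b] conjI)

lemma hbndI: "u \<in> kspan (hrelgens smA smM n) \<Longrightarrow> y \<in> hchains (Suc n) \<Longrightarrow>
  z = (\<lambda>s. u s + hbd mul l r y s) \<Longrightarrow> z \<in> hboundaries smA mul smM l r n"
  unfolding hboundaries_def by (intro CollectI exI[of _ u] exI[of _ y] conjI)

lemma coset_eq_iff:
  assumes "sub B"
  shows "coset B x = coset B y \<longleftrightarrow> (\<lambda>s. x s - y s) \<in> B"
proof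
  assume eq: "coset B x = coset B y"
  have "x \<in> coset B x" unfolding coset_def using sub_zero[OF assms] by force
  then have "x \<in> coset B y" using eq by simp
  then obtain b where b: "b \<in> B" "x = (\<lambda>s. y s + b s)" unfolding coset_def by blast
  then have "(\<lambda>s. x s - y s) = b" by (simp add: fun_eq_iff)
  then show "(\<lambda>s. x s - y s) \<in> B" using b by simp
next
  assume d: "(\<lambda>s. x s - y s) \<in> B"
  show "coset B x = coset B y"
  proof (intro set_eqI iffI)
    fix z assume "z \<in> coset B x"
    then obtain b where b: "b \<in> B" "z = (\<lambda>s. x s + b s)" unfolding coset_def by blast
    have "(\<lambda>s. (x s - y s) + b s) \<in> B" using sub_add[OF assms d b(1)] .
    moreover have "z = (\<lambda>s. y s + ((x s - y s) + b s))" using b by (simp add: fun_eq_iff)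
    ultimately show "z \<in> coset B y" by (rule coset_memI)
  next
    fix z assume "z \<in> coset B y"
    then obtain b where b: "b \<in> B" "z = (\<lambda>s. y s + b s)" unfolding coset_def by blast
    have "(\<lambda>s. b s - (x s - y s)) \<in> B" using sub_diff[OF assms b(1) d] .
    moreover have "z = (\<lambda>s. x s + (b s - (x s - y s)))" using b by (simp add: fun_eq_iff)
    ultimately show "z \<in> coset B x" by (rule coset_memI)
  qed
qed

lemma coset_lin:
  assumes "sub B"
  shows "coset B (\<lambda>s. c * a s + b s) = {(\<lambda>s. c * u s + v s) | u v. u \<in> coset B a \<and> v \<in> coset B b}"
proof (intro set_eqI iffI)
  fix z assume "z \<in> coset B (\<lambda>s. c * a s + b s)"
  then obtain w where w: "w \<in> B" "z = (\<lambda>s. c * a s + b s + w s)" unfolding coset_def by blast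
  have "a \<in> coset B a" unfolding coset_def using sub_zero[OF assms] by force
  moreover have "(\<lambda>s. b s + w s) \<in> coset B b" using w(1) by (rule coset_memI) simp
  moreover have "z = (\<lambda>s. c * a s + (b s + w s))" using w by (simp add: fun_eq_iff algebra_simps)
  ultimately show "z \<in> {(\<lambda>s. c * u s + v s) | u v. u \<in> coset B a \<and> v \<in> coset B b}"
    by (intro CollectI exI[of _ a] exI[of _ "\<lambda>s. b s + w s"] conjI)
next
  fix z assume "z \<in> {(\<lambda>s. c * u s + v s) | u v. u \<in> coset B a \<and> v \<in> coset B b}"
  then obtain u v where uv: "z = (\<lambda>s. c * u s + v s)" "u \<in> coset B a" "v \<in> coset B b" by blast
  obtain w1 where w1: "w1 \<in> B" "u = (\<lambda>s. a s + w1 s)" using uv(2) unfolding coset_def by blast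
  obtain w2 where w2: "w2 \<in> B" "v = (\<lambda>s. b s + w2 s)" using uv(3) unfolding coset_def by blast
  have "(\<lambda>s. c * w1 s + w2 s) \<in> B" using sub_lin[OF assms w1(1) w2(1)] .
  moreover have "z = (\<lambda>s. c * a s + b s + (c * w1 s + w2 s))"
    using uv(1) w1 w2 by (simp add: fun_eq_iff algebra_simps)
  ultimately show "z \<in> coset B (\<lambda>s. c * a s + b s)" by (rule coset_memI)
qed

lemma hchains_sum: "finite I \<Longrightarrow> (\<And>i. i \<in> I \<Longrightarrow> v i \<in> hchains n) \<Longrightarrow>
   (\<lambda>s. \<Sum>i\<in>I. c i * v i s :: 'k::field) \<in> hchains n"
proof (induction I rule: finite_induct)
  case empty then show ?case by (simp add: hchains_zero)
next
  case (insert i I) then show ?case by (simp add: hchains_lin)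
qed

lemma length_face:
  assumes "as \<noteq> []" "i \<le> length as"
  shows "length (snd (face mul l r i (m, as))) = length as - 1"
  using assms by (auto simp: face_def min_def)

lemma hbgen_hchains: "length as = Suc n \<Longrightarrow> hbgen mul l r (m, as) \<in> hchains n"
proof -
  assume a: "length as = Suc n"
  then have ne: "as \<noteq> []" by auto
  show ?thesis unfolding hbgen_face[OF ne]
  proof (rule hchains_sum)
    fix i assume "i \<in> {0..length as}"
    then have "length (snd (face mul l r i (m, as))) = n" using length_face[OF ne, of i] a by simp
    then show "gen (face mul l r i (m, as)) \<in> hchains n"
      by (metis hchains_gen prod.collapse)
  qed simp
qed

lemma hbgen_fin: "fin (hbgen mul l r t :: _ \<Rightarrow> 'k::field)"
proof -
  obtain m as where t: "t = (m, as)" by (cases t)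
  show ?thesis
  proof (cases as)
    case Nil then show ?thesis using t by (simp add: hbgen_nil)
  next
    case (Cons a as')
    then have "hbgen mul l r t \<in> (hchains (length as') :: (_ \<Rightarrow> 'k) set)"
      using t hbgen_hchains[of as "length as'"] by simp
    then show ?thesis by (rule hchains_fin)
  qed
qed

lemma hbd_lin: "fin x \<Longrightarrow> fin y \<Longrightarrow>
  hbd mul l r (\<lambda>s. c * x s + y s) = (\<lambda>s. c * hbd mul l r x s + hbd mul l r y s)"
  unfolding hbd_Lin by (rule Lin_lin)

lemma hbd_ch: "x \<in> hchains (Suc n) \<Longrightarrow> hbd mul l r x \<in> hchains n"
  unfolding hbd_Lin by (rule Lin_hchains) (auto simp: hbgen_fin hbgen_hchains)

lemma hbd_ch0: assumes "x \<in> hchains 0" shows "hbd mul l r x = (\<lambda>s. 0)"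
proof
  fix s
  have "hbd mul l r x s = (\<Sum>t\<in>{t. x t \<noteq> 0}. x t * hbgen mul l r t s)"
    by (simp add: hbd_def)
  also have "\<dots> = 0"
  proof (rule sum.neutral, rule ballI)
    fix t assume "t \<in> {t. x t \<noteq> 0}"
    moreover obtain m as where t: "t = (m, as)" by (cases t)
    ultimately have "as = []" using assms by (auto simp: hchains_def)
    then show "x t * hbgen mul l r t s = 0" using t by (simp add: hbgen_nil)
  qed
  finally show "hbd mul l r x s = 0" .
qed

lemma hbd_ch': "x \<in> hchains n \<Longrightarrow> hbd mul l r x \<in> hchains (n - 1)"
  by (cases n) (auto simp: hbd_ch hbd_ch0 hchains_zero)

lemma hbd_zero: "hbd mul l r (\<lambda>s. 0) = (\<lambda>s. 0)"
  by (simp add: hbd_Lin Lin_zero)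

lemma hbnd_sub: "sub (hboundaries smA mul smM l r n)"
  unfolding sub_def
proof (intro conjI ballI allI)
  show "(\<lambda>s. 0) \<in> hboundaries smA mul smM l r n"
    unfolding hboundaries_def using kspan.kspan_zero hchains_zero[of "Suc n"]
    by (force simp: hbd_zero)
  fix x y c assume x: "x \<in> hboundaries smA mul smM l r n" and y: "y \<in> hboundaries smA mul smM l r n"
  obtain u1 y1 where 1: "x = (\<lambda>s. u1 s + hbd mul l r y1 s)" "u1 \<in> kspan (hrelgens smA smM n)" "y1 \<in> hchains (Suc n)"
    using x unfolding hboundaries_def by blast
  obtain u2 y2 where 2: "y = (\<lambda>s. u2 s + hbd mul l r y2 s)" "u2 \<in> kspan (hrelgens smA smM n)" "y2 \<in> hchains (Suc n)"
    using y unfolding hboundaries_def by blast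
  have "hbd mul l r (\<lambda>s. c * y1 s + y2 s) = (\<lambda>s. c * hbd mul l r y1 s + hbd mul l r y2 s)"
    using 1 2 by (intro hbd_lin) (auto intro: hchains_fin)
  then have "(\<lambda>s. c * x s + y s) = (\<lambda>s. (c * u1 s + u2 s) + hbd mul l r (\<lambda>s. c * y1 s + y2 s) s)"
    using 1 2 by (simp add: fun_eq_iff algebra_simps)
  moreover have "(\<lambda>s. c * u1 s + u2 s) \<in> kspan (hrelgens smA smM n)" using 1 2 by (simp add: kspan_lin)
  moreover have "(\<lambda>s. c * y1 s + y2 s) \<in> hchains (Suc n)" using 1 2 by (simp add: hchains_lin)
  ultimately show "(\<lambda>s. c * x s + y s) \<in> hboundaries smA mul smM l r n"
    by (intro hbndI) auto
qed

lemma hcyc_lin: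
  assumes "x \<in> hcycles smA mul smM l r n" "y \<in> hcycles smA mul smM l r n"
  shows "(\<lambda>s. c * x s + y s) \<in> hcycles smA mul smM l r n"
proof -
  have "hbd mul l r (\<lambda>s. c * x s + y s) = (\<lambda>s. c * hbd mul l r x s + hbd mul l r y s)"
    using assms by (intro hbd_lin) (auto simp: hcycles_def intro: hchains_fin)
  then show ?thesis using assms by (auto simp: hcycles_def hchains_lin kspan_lin)
qed

lemma hcyc_diff:
  assumes "x \<in> hcycles smA mul smM l r n" "y \<in> hcycles smA mul smM l r n"
  shows "(\<lambda>s. x s - y s) \<in> hcycles smA mul smM l r n"
  using hcyc_lin[OF assms(2,1), of "-1"] by simp


lemma iso_crit:
  fixes Pi :: "('m::ab_group_add \<times> 'a::ab_group_add list \<Rightarrow> 'k::field) \<Rightarrow> ('m \<times> 'b::ab_group_add list \<Rightarrow> 'k)"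
    and Jm :: "('m \<times> 'b list \<Rightarrow> 'k) \<Rightarrow> ('m \<times> 'a list \<Rightarrow> 'k)"
    and H :: "('m \<times> 'a list \<Rightarrow> 'k) \<Rightarrow> ('m \<times> 'a list \<Rightarrow> 'k)"
    and smA :: "'k \<Rightarrow> 'a \<Rightarrow> 'a" and smB :: "'k \<Rightarrow> 'b \<Rightarrow> 'b" and smM :: "'k \<Rightarrow> 'm \<Rightarrow> 'm"
  assumes Pi_ch: "\<And>x k. x \<in> hchains k \<Longrightarrow> Pi x \<in> hchains k"
    and Pi_lin: "\<And>x y k c. x \<in> hchains k \<Longrightarrow> y \<in> hchains k \<Longrightarrow> Pi (\<lambda>s. c * x s + y s) = (\<lambda>s. c * Pi x s + Pi y s)"
    and Pi_rel: "\<And>u k. u \<in> kspan (hrelgens smA smM k) \<Longrightarrow> Pi u \<in> kspan (hrelgens smB smM k)"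
    and Pi_bd: "\<And>x k. x \<in> hchains k \<Longrightarrow> Pi (hbd mulA lA rA x) = hbd mulB lB rB (Pi x)"
    and J_ch: "\<And>x k. x \<in> hchains k \<Longrightarrow> Jm x \<in> hchains k"
    and J_lin: "\<And>x y k c. x \<in> hchains k \<Longrightarrow> y \<in> hchains k \<Longrightarrow> Jm (\<lambda>s. c * x s + y s) = (\<lambda>s. c * Jm x s + Jm y s)"
    and J_rel: "\<And>u k. u \<in> kspan (hrelgens smB smM k) \<Longrightarrow> Jm u \<in> kspan (hrelgens smA smM k)"
    and J_bd: "\<And>x k. x \<in> hchains k \<Longrightarrow> Jm (hbd mulB lB rB x) = hbd mulA lA rA (Jm x)"
    and PJ: "\<And>y k. y \<in> hchains k \<Longrightarrow> Pi (Jm y) = y"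
    and H_ch: "\<And>x k. x \<in> hchains k \<Longrightarrow> H x \<in> hchains (Suc k)"
    and H_zero: "H (\<lambda>s. 0) = (\<lambda>s. 0)"
    and H_rel: "\<And>u k. u \<in> kspan (hrelgens smA smM k) \<Longrightarrow> H u \<in> kspan (hrelgens smA smM (Suc k))"
    and htpy: "\<And>x k. x \<in> hchains k \<Longrightarrow>
        x = (\<lambda>s. Jm (Pi x) s + (hbd mulA lA rA (H x) s + H (hbd mulA lA rA x) s))"
  shows "hochschild_iso smA mulA smM lA rA smB mulB smM lB rB n"
proof -
  define ZA where "ZA = hcycles smA mulA smM lA rA n"
  define BA where "BA = hboundaries smA mulA smM lA rA n"
  define ZB where "ZB = hcycles smB mulB smM lB rB n"
  define BB where "BB = hboundaries smB mulB smM lB rB n"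
  have sA: "sub BA" unfolding BA_def by (rule hbnd_sub)
  have sB: "sub BB" unfolding BB_def by (rule hbnd_sub)
  have ZAch: "x \<in> hchains n" if "x \<in> ZA" for x using that by (simp add: ZA_def hcycles_def)
  have Pi_diff: "Pi (\<lambda>s. x s - y s) = (\<lambda>s. Pi x s - Pi y s)" if "x \<in> hchains k" "y \<in> hchains k" for x y k
  proof -
    have "Pi (\<lambda>s. (-1) * y s + x s) = (\<lambda>s. (-1) * Pi y s + Pi x s)" using Pi_lin that by blast
    moreover have "(\<lambda>s. (-1) * y s + x s) = (\<lambda>s. x s - y s)" by (simp add: fun_eq_iff)
    ultimately show ?thesis by (simp add: fun_eq_iff)
  qed
  have Pi_add: "Pi (\<lambda>s. x s + y s) = (\<lambda>s. Pi x s + Pi y s)" if "x \<in> hchains k" "y \<in> hchains k" for x y k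
    using Pi_lin[OF that, of 1] by simp
  have J_add: "Jm (\<lambda>s. x s + y s) = (\<lambda>s. Jm x s + Jm y s)" if "x \<in> hchains k" "y \<in> hchains k" for x y k
    using J_lin[OF that, of 1] by simp
  have PiZ: "Pi x \<in> ZB" if "x \<in> ZA" for x
  proof -
    have "hbd mulA lA rA x \<in> kspan (hrelgens smA smM (n - 1))" using that by (simp add: ZA_def hcycles_def)
    then have "Pi (hbd mulA lA rA x) \<in> kspan (hrelgens smB smM (n - 1))" by (rule Pi_rel)
    then show ?thesis using that Pi_bd[OF ZAch[OF that]] Pi_ch[OF ZAch[OF that]]
      by (simp add: ZB_def hcycles_def)
  qed
  have JZ: "Jm y \<in> ZA" if "y \<in> ZB" for y
  proof -
    have yc: "y \<in> hchains n" using that by (simp add: ZB_def hcycles_def)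
    have "hbd mulB lB rB y \<in> kspan (hrelgens smB smM (n - 1))" using that by (simp add: ZB_def hcycles_def)
    then have "Jm (hbd mulB lB rB y) \<in> kspan (hrelgens smA smM (n - 1))" by (rule J_rel)
    then show ?thesis using J_bd[OF yc] J_ch[OF yc] by (simp add: ZA_def hcycles_def)
  qed
  have PiB: "Pi z \<in> BB" if zB: "z \<in> BA" for z
  proof -
    obtain u y where uy: "z = (\<lambda>s. u s + hbd mulA lA rA y s)" "u \<in> kspan (hrelgens smA smM n)" "y \<in> hchains (Suc n)"
      using zB unfolding BA_def hboundaries_def by blast
    have uc: "u \<in> hchains n" using uy(2) by (rule kspan_hchains)
    have bc: "hbd mulA lA rA y \<in> hchains n" using uy(3) by (rule hbd_ch)
    have "Pi z = (\<lambda>s. Pi u s + hbd mulB lB rB (Pi y) s)"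
      unfolding uy(1) Pi_add[OF uc bc] Pi_bd[OF uy(3)] ..
    then show ?thesis unfolding BB_def
      by (intro hbndI[OF Pi_rel[OF uy(2)] Pi_ch[OF uy(3)]])
  qed
  have key: "coset BA x = coset BA x' \<longleftrightarrow> coset BB (Pi x) = coset BB (Pi x')" if "x \<in> ZA" "x' \<in> ZA" for x x'
  proof -
    define z where "z = (\<lambda>s. x s - x' s)"
    have zZ: "z \<in> ZA" unfolding z_def ZA_def using that unfolding ZA_def by (rule hcyc_diff)
    have zc: "z \<in> hchains n" using zZ by (rule ZAch)
    have Pz: "Pi z = (\<lambda>s. Pi x s - Pi x' s)" unfolding z_def by (rule Pi_diff[OF ZAch ZAch]; fact)
    have "z \<in> BA \<longleftrightarrow> Pi z \<in> BB"
    proof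
      assume "z \<in> BA" then show "Pi z \<in> BB" by (rule PiB)
    next
      assume "Pi z \<in> BB"
      then obtain u w where uw: "Pi z = (\<lambda>s. u s + hbd mulB lB rB w s)" "u \<in> kspan (hrelgens smB smM n)" "w \<in> hchains (Suc n)"
        unfolding BB_def hboundaries_def by blast
      have uc: "u \<in> hchains n" using uw(2) by (rule kspan_hchains)
      have bwc: "hbd mulB lB rB w \<in> hchains n" using uw(3) by (rule hbd_ch)
      have JPz: "Jm (Pi z) = (\<lambda>s. Jm u s + hbd mulA lA rA (Jm w) s)"
        unfolding uw(1) J_add[OF uc bwc] J_bd[OF uw(3)] ..
      have Hb: "H (hbd mulA lA rA z) \<in> kspan (hrelgens smA smM n)"
      proof (cases n)
        case 0
        then have "hbd mulA lA rA z = (\<lambda>s. 0)" using zc hbd_ch0 by blast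
        then show ?thesis using H_zero kspan.kspan_zero by simp
      next
        case (Suc k)
        have "hbd mulA lA rA z \<in> kspan (hrelgens smA smM (n - 1))" using zZ by (simp add: ZA_def hcycles_def)
        then show ?thesis using H_rel[of _ "n - 1"] Suc by simp
      qed
      have Jwc: "Jm w \<in> hchains (Suc n)" using uw(3) by (rule J_ch)
      have Hzc: "H z \<in> hchains (Suc n)" using zc by (rule H_ch)
      have bsum: "hbd mulA lA rA (\<lambda>s. Jm w s + H z s) = (\<lambda>s. hbd mulA lA rA (Jm w) s + hbd mulA lA rA (H z) s)"
        using hbd_lin[OF hchains_fin[OF Jwc] hchains_fin[OF Hzc], of mulA lA rA 1] by simp
      have "z = (\<lambda>s. (Jm u s + H (hbd mulA lA rA z) s) + hbd mulA lA rA (\<lambda>s. Jm w s + H z s) s)"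
        apply (subst htpy[OF zc])
        unfolding JPz bsum by (simp add: fun_eq_iff algebra_simps)
      moreover have "(\<lambda>s. Jm u s + H (hbd mulA lA rA z) s) \<in> kspan (hrelgens smA smM n)"
        using kspan_lin[OF J_rel[OF uw(2)] Hb, of 1] by simp
      moreover have "(\<lambda>s. Jm w s + H z s) \<in> hchains (Suc n)"
        using hchains_lin[OF Jwc Hzc, of 1] by simp
      ultimately show "z \<in> BA" unfolding BA_def by (intro hbndI)
    qed
    then show ?thesis using coset_eq_iff[OF sA] coset_eq_iff[OF sB] Pz z_def by simp
  qed
  define F where "F X = coset BB (Pi (SOME x. x \<in> ZA \<and> X = coset BA x))" for X
  have Fco: "F (coset BA x) = coset BB (Pi x)" if "x \<in> ZA" for x
  proof -
    define x0 where "x0 = (SOME x0. x0 \<in> ZA \<and> coset BA x = coset BA x0)"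
    have "x0 \<in> ZA \<and> coset BA x = coset BA x0"
      unfolding x0_def by (rule someI[of _ x]) (use that in simp)
    then have "coset BB (Pi x) = coset BB (Pi x0)" using key that by blast
    then show ?thesis unfolding F_def x0_def by simp
  qed
  have HA: "hochschild_homology smA mulA smM lA rA n = coset BA ` ZA"
    by (simp add: hochschild_homology_def ZA_def BA_def)
  have HB: "hochschild_homology smB mulB smM lB rB n = coset BB ` ZB"
    by (simp add: hochschild_homology_def ZB_def BB_def)
  have bij: "bij_betw F (coset BA ` ZA) (coset BB ` ZB)"
  proof (rule bij_betw_imageI)
    show "inj_on F (coset BA ` ZA)"
    proof (rule inj_onI)
      fix X X' assume "X \<in> coset BA ` ZA" "X' \<in> coset BA ` ZA" "F X = F X'"
      then obtain x x' where xx: "x \<in> ZA" "x' \<in> ZA" "X = coset BA x" "X' = coset BA x'"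
        "F (coset BA x) = F (coset BA x')" by blast
      then have "coset BB (Pi x) = coset BB (Pi x')" using Fco[OF xx(1)] Fco[OF xx(2)] by simp
      then show "X = X'" using key[OF xx(1,2)] xx(3,4) by simp
    qed
    show "F ` coset BA ` ZA = coset BB ` ZB"
    proof (intro set_eqI iffI)
      fix Y assume "Y \<in> F ` coset BA ` ZA"
      then obtain x where "x \<in> ZA" "Y = F (coset BA x)" by blast
      then show "Y \<in> coset BB ` ZB" using Fco PiZ by blast
    next
      fix Y assume "Y \<in> coset BB ` ZB"
      then obtain y where y: "y \<in> ZB" "Y = coset BB y" by blast
      have yc: "y \<in> hchains n" using y by (simp add: ZB_def hcycles_def)
      have "F (coset BA (Jm y)) = Y" using Fco[OF JZ[OF y(1)]] PJ[OF yc] y by simp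
      then show "Y \<in> F ` coset BA ` ZA" using JZ[OF y(1)] by blast
    qed
  qed
  have lin: "F (coset BA (\<lambda>s. c * x s + y s)) =
           {(\<lambda>s. c * u s + v s) | u v. u \<in> F (coset BA x) \<and> v \<in> F (coset BA y)}"
    if "x \<in> ZA" "y \<in> ZA" for x y c
  proof -
    have "(\<lambda>s. c * x s + y s) \<in> ZA" using that unfolding ZA_def by (rule hcyc_lin)
    then have "F (coset BA (\<lambda>s. c * x s + y s)) = coset BB (Pi (\<lambda>s. c * x s + y s))" by (rule Fco)
    also have "\<dots> = coset BB (\<lambda>s. c * Pi x s + Pi y s)" using Pi_lin[OF ZAch ZAch] that by simp
    also have "\<dots> = {(\<lambda>s. c * u s + v s) | u v. u \<in> coset BB (Pi x) \<and> v \<in> coset BB (Pi y)}"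
      by (rule coset_lin[OF sB])
    finally show ?thesis using Fco that by simp
  qed
  show ?thesis unfolding hochschild_iso_def HA HB
  proof (intro exI[of _ F] conjI ballI allI)
    show "bij_betw F (coset BA ` ZA) (coset BB ` ZB)" by (rule bij)
    fix x y c assume "x \<in> hcycles smA mulA smM lA rA n" "y \<in> hcycles smA mulA smM lA rA n"
    then show "F (coset (hboundaries smA mulA smM lA rA n) (\<lambda>s. c * x s + y s)) =
           {(\<lambda>s. c * u s + v s) | u v. u \<in> F (coset (hboundaries smA mulA smM lA rA n) x) \<and>
              v \<in> F (coset (hboundaries smA mulA smM lA rA n) y)}"
      using lin[of x y c] unfolding ZA_def BA_def by simp
  qed
qed


definition mapc :: "('a \<Rightarrow> 'b) \<Rightarrow> ('m \<times> 'a list \<Rightarrow> 'k::field) \<Rightarrow> ('m \<times> 'b list \<Rightarrow> 'k)" where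
  "mapc f = Lin (\<lambda>t. gen (fst t, map f (snd t)))"

lemma mapc_gen: "mapc f (gen (m, as)) = gen (m, map f as)"
  by (simp add: mapc_def Lin_gen)

lemma mapc_fin: "fin x \<Longrightarrow> fin (mapc f x)"
  unfolding mapc_def by (rule fin_Lin) (auto simp: fin_gen)

lemma mapc_ch: "x \<in> hchains k \<Longrightarrow> mapc f x \<in> hchains k"
  unfolding mapc_def by (rule Lin_hchains) (auto simp: fin_gen hchains_gen)

lemma mapc_lin: "fin x \<Longrightarrow> fin y \<Longrightarrow> mapc f (\<lambda>s. c * x s + y s) = (\<lambda>s. c * mapc f x s + mapc f y s)"
  unfolding mapc_def by (rule Lin_lin)

lemma Lin_gen3:
  fixes G :: "'x \<Rightarrow> 'y \<Rightarrow> 'k::field"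
  shows "Lin G (\<lambda>s. gen a s - gen b s - gen c s) = (\<lambda>s. G a s - G b s - G c s)"
proof -
  have f1: "fin (\<lambda>s. gen a s - gen b s :: 'k)"
    using fin_lin[OF fin_gen[of b] fin_gen[of a], of "-1"] by simp
  have "Lin G (\<lambda>s. gen a s - gen b s - gen c s) = (\<lambda>s. Lin G (\<lambda>s. gen a s - gen b s) s - Lin G (gen c) s)"
    by (rule Lin_diff[OF f1 fin_gen])
  also have "Lin G (\<lambda>s. gen a s - gen b s) = (\<lambda>s. Lin G (gen a) s - Lin G (gen b) s)"
    by (rule Lin_diff[OF fin_gen fin_gen])
  finally show ?thesis by (simp add: Lin_gen)
qed

lemma Lin_gen2:
  fixes G :: "'x \<Rightarrow> 'y \<Rightarrow> 'k::field"
  shows "Lin G (\<lambda>s. gen a s - c * gen b s) = (\<lambda>s. G a s - c * G b s)"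
proof -
  have f1: "fin (\<lambda>s. c * gen b s :: 'k)"
    using fin_lin[OF fin_gen[of b] fin_zero, of c] by simp
  have "Lin G (\<lambda>s. gen a s - c * gen b s) = (\<lambda>s. Lin G (gen a) s - Lin G (\<lambda>s. c * gen b s) s)"
    by (rule Lin_diff[OF fin_gen f1])
  also have "Lin G (\<lambda>s. c * gen b s) = (\<lambda>s. c * Lin G (gen b) s)"
    by (rule Lin_smult[OF fin_gen])
  finally show ?thesis by (simp add: Lin_gen)
qed

lemma hbd_gen: "hbd mul l r (gen t) = hbgen mul l r t"
  by (simp add: hbd_Lin Lin_gen)

lemma fin_hbd: "fin x \<Longrightarrow> fin (hbd mul l r x)"
  unfolding hbd_Lin by (rule fin_Lin) (auto simp: hbgen_fin)

lemma mapc_rel: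
  fixes u :: "'m::ab_group_add \<times> 'a::ab_group_add list \<Rightarrow> 'k::field" and f :: "'a \<Rightarrow> 'b::ab_group_add"
  assumes fadd: "\<And>x y. f (x + y) = f x + f y" and fsm: "\<And>c x. f (smA c x) = smB c (f x)"
    and u: "u \<in> kspan (hrelgens smA smM k)"
  shows "mapc f u \<in> kspan (hrelgens smB smM k)"
  unfolding mapc_def
proof (rule kspan_Lin[OF u])
  fix g assume g: "g \<in> hrelgens smA smM k"
  then show "fin g" using hrelgens_hchains hchains_fin by blast
  let ?G = "\<lambda>t. gen (fst t, map f (snd t)) :: _ \<Rightarrow> 'k"
  show "Lin ?G g \<in> kspan (hrelgens smB smM k)"
    using g[unfolded hrelgens_def]
  proof (elim UnE CollectE exE conjE)
    fix m m' as assume h: "length as = k" "g = (\<lambda>s. gen (m + m', as) s - gen (m, as) s - gen (m', as) s)"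
    have "Lin ?G g = (\<lambda>s. gen (m + m', map f as) s - gen (m, map f as) s - gen (m', map f as) s)"
      using h by (simp add: Lin_gen3)
    moreover have "\<dots> \<in> hrelgens smB smM k" unfolding hrelgens_def using h
      by (intro UnI1 CollectI exI[of _ m] exI[of _ m'] exI[of _ "map f as"]) simp
    ultimately show ?thesis by (simp add: kspan_gen)
  next
    fix c m as assume h: "length as = k" "g = (\<lambda>s. gen (smM c m, as) s - c * gen (m, as) s)"
    have "Lin ?G g = (\<lambda>s. gen (smM c m, map f as) s - c * gen (m, map f as) s)"
      using h by (simp add: Lin_gen2)
    moreover have "\<dots> \<in> hrelgens smB smM k" unfolding hrelgens_def using h
      by (intro UnI1 UnI2 CollectI exI[of _ c] exI[of _ m] exI[of _ "map f as"]) simp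
    ultimately show ?thesis by (simp add: kspan_gen)
  next
    fix m as i x y assume h: "length as = k" "i < k" "g = (\<lambda>s. gen (m, as[i := x + y]) s - gen (m, as[i := x]) s - gen (m, as[i := y]) s)"
    have "Lin ?G g = (\<lambda>s. gen (m, (map f as)[i := f x + f y]) s - gen (m, (map f as)[i := f x]) s - gen (m, (map f as)[i := f y]) s)"
      using h by (simp add: Lin_gen3 map_update fadd)
    moreover have "\<dots> \<in> hrelgens smB smM k" unfolding hrelgens_def using h
      by (intro UnI1 UnI2 CollectI exI[of _ m] exI[of _ "map f as"] exI[of _ i] exI[of _ "f x"] exI[of _ "f y"]) simp
    ultimately show ?thesis by (simp add: kspan_gen)
  next
    fix m as i c x assume h: "length as = k" "i < k" "g = (\<lambda>s. gen (m, as[i := smA c x]) s - c * gen (m, as[i := x]) s)"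
    have "Lin ?G g = (\<lambda>s. gen (m, (map f as)[i := smB c (f x)]) s - c * gen (m, (map f as)[i := f x]) s)"
      using h by (simp add: Lin_gen2 map_update fsm)
    moreover have "\<dots> \<in> hrelgens smB smM k" unfolding hrelgens_def using h
      by (intro UnI2 CollectI exI[of _ m] exI[of _ "map f as"] exI[of _ i] exI[of _ c] exI[of _ "f x"]) simp
    ultimately show ?thesis by (simp add: kspan_gen)
  qed
qed

lemma mapc_face:
  assumes fmul: "\<And>a b. f (mulA a b) = mulB (f a) (f b)"
    and fr: "\<And>m a. rb m (f a) = ra m a" and fl: "\<And>m a. lb (f a) m = la a m"
    and ne: "as \<noteq> []" and i: "i \<le> length as"
  shows "(fst (face mulA la ra i (m, as)), map f (snd (face mulA la ra i (m, as))))
         = face mulB lb rb i (m, map f as)"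
  using ne i by (auto simp: face_def fr fl fmul hd_map last_map map_butlast map_tl take_map drop_map)

lemma mapc_bd:
  assumes fmul: "\<And>a b. f (mulA a b) = mulB (f a) (f b)"
    and fr: "\<And>m a. rb m (f a) = ra m a" and fl: "\<And>m a. lb (f a) m = la a m"
    and x: "fin x"
  shows "mapc f (hbd mulA la ra x) = hbd mulB lb rb (mapc f x)"
  using x
proof (induction x rule: fin_induct)
  case zero then show ?case by (simp add: hbd_zero mapc_def Lin_zero)
next
  case (step x c t)
  obtain m as where t: "t = (m, as)" by (cases t)
  have gen_case: "mapc f (hbgen mulA la ra (m, as)) = hbgen mulB lb rb (m, map f as)"
  proof (cases "as = []")
    case True then show ?thesis by (simp add: hbgen_nil mapc_def Lin_zero)
  next
    case False
    then have ne: "map f as \<noteq> []" by simp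
    have "mapc f (hbgen mulA la ra (m, as))
        = (\<lambda>s. \<Sum>i\<in>{0..length as}. (-1)^i * mapc f (gen (face mulA la ra i (m, as))) s)"
      unfolding hbgen_face[OF False] mapc_def by (rule Lin_sum) (auto simp: fin_gen)
    also have "\<dots> = (\<lambda>s. \<Sum>i\<in>{0..length as}. (-1)^i * gen (face mulB lb rb i (m, map f as)) s)"
    proof (intro ext sum.cong refl)
      fix s i assume "i \<in> {0..length as}"
      then have "i \<le> length as" by simp
      moreover obtain m' bs where fa: "face mulA la ra i (m, as) = (m', bs)" by (cases "face mulA la ra i (m, as)")
      ultimately have "(m', map f bs) = face mulB lb rb i (m, map f as)"
        using mapc_face[where f=f and mulA=mulA and mulB=mulB and ra=ra and rb=rb and la=la and lb=lb, OF fmul fr fl False, of i m]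
        by simp
      then show "(-1)^i * mapc f (gen (face mulA la ra i (m, as))) s = (-1)^i * gen (face mulB lb rb i (m, map f as)) s"
        using fa by (simp add: mapc_gen)
    qed
    also have "\<dots> = hbgen mulB lb rb (m, map f as)"
      using hbgen_face[OF ne, of mulB lb rb m] by (simp only: length_map) (erule sym)
    finally show ?thesis .
  qed
  have fx: "fin (mapc f x)" by (rule mapc_fin[OF step(1)])
  have e1: "hbd mulA la ra (\<lambda>s. c * gen t s + x s) = (\<lambda>s. c * hbgen mulA la ra t s + hbd mulA la ra x s)"
    by (simp add: hbd_lin[OF fin_gen step(1)] hbd_gen)
  have e2: "mapc f (\<lambda>s. c * hbgen mulA la ra t s + hbd mulA la ra x s)
      = (\<lambda>s. c * mapc f (hbgen mulA la ra t) s + mapc f (hbd mulA la ra x) s)"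
    by (rule mapc_lin[OF hbgen_fin fin_hbd[OF step(1)]])
  have e3: "mapc f (\<lambda>s. c * gen t s + x s) = (\<lambda>s. c * gen (m, map f as) s + mapc f x s)"
    by (simp add: mapc_lin[OF fin_gen step(1)] t mapc_gen)
  have e4: "hbd mulB lb rb (\<lambda>s. c * gen (m, map f as) s + mapc f x s)
      = (\<lambda>s. c * hbgen mulB lb rb (m, map f as) s + hbd mulB lb rb (mapc f x) s)"
    by (simp add: hbd_lin[OF fin_gen fx] hbd_gen)
  show ?case unfolding e1 e2 e3 e4 step(2) unfolding t gen_case ..
qed

lemma mapc_comp: "fin x \<Longrightarrow> mapc g (mapc f x) = mapc (g \<circ> f) x"
  unfolding mapc_def by (subst Lin_comp) (auto simp: fin_gen Lin_gen)

lemma mapc_id: assumes x: "fin x" and f: "\<And>a. f a = a" shows "mapc f x = x"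
  using x
proof (induction x rule: fin_induct)
  case zero then show ?case by (simp add: mapc_def Lin_zero)
next
  case (step x c t)
  obtain m as where t: "t = (m, as)" by (cases t)
  have "map f as = as" using f by (simp add: map_idI)
  then show ?case using step t by (simp add: mapc_lin fin_gen mapc_gen)
qed


definition Gh :: "('a \<Rightarrow> 'a) \<Rightarrow> 'a \<Rightarrow> 'm \<times> 'a list \<Rightarrow> 'm \<times> 'a list \<Rightarrow> 'k::field" where
  "Gh e E t = (\<lambda>s. \<Sum>j\<in>{0..length (snd t)}. (-1)^j * gen (hop e E j t) s)"

definition hopc :: "('a \<Rightarrow> 'a) \<Rightarrow> 'a \<Rightarrow> ('m \<times> 'a list \<Rightarrow> 'k::field) \<Rightarrow> 'm \<times> 'a list \<Rightarrow> 'k" where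
  "hopc e E = Lin (Gh e E)"

lemma length_hop: "length (snd (hop e E j t)) = Suc (length (snd t))"
  by (cases t) (simp add: hop_def)

lemma Gh_ch: "length as = n \<Longrightarrow> Gh e E (m, as) \<in> hchains (Suc n)"
  unfolding Gh_def
  by (rule hchains_sum) (auto simp: hop_def intro!: hchains_gen)

lemma Gh_fin: "fin (Gh e E t :: _ \<Rightarrow> 'k::field)"
proof -
  obtain m as where "t = (m, as)" by (cases t)
  then show ?thesis using Gh_ch[of as "length as" e E m] hchains_fin by (metis (no_types))
qed

lemma hopc_gen: "hopc e E (gen t) = Gh e E t"
  by (simp add: hopc_def Lin_gen)

lemma hopc_fin: "fin x \<Longrightarrow> fin (hopc e E x)"
  unfolding hopc_def by (rule fin_Lin) (auto simp: Gh_fin)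

lemma hopc_ch: "x \<in> hchains k \<Longrightarrow> hopc e E x \<in> hchains (Suc k)"
  unfolding hopc_def by (rule Lin_hchains) (auto simp: Gh_fin Gh_ch)

lemma hopc_zero: "hopc e E (\<lambda>s. 0) = (\<lambda>s. 0)"
  by (simp add: hopc_def Lin_zero)

lemma hopc_lin: "fin x \<Longrightarrow> fin y \<Longrightarrow> hopc e E (\<lambda>s. c * x s + y s) = (\<lambda>s. c * hopc e E x s + hopc e E y s)"
  unfolding hopc_def by (rule Lin_lin)

lemma hop_upd_lt:
  assumes "i < j" "j \<le> length as"
  shows "snd (hop e E j (m, as[i := v])) = (snd (hop e E j (m, as)))[i := e v]"
  using assms by (simp add: hop_def take_update_swap map_update list_update_append)

lemma hop_upd_ge:
  assumes "j \<le> i" "i < length as"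
  shows "snd (hop e E j (m, as[i := v])) = (snd (hop e E j (m, as)))[Suc i := v]"
  using assms by (simp add: hop_def drop_update_swap list_update_append Suc_diff_le)

lemma hop_fst: "fst (hop e E j (m, as)) = m"
  by (simp add: hop_def)

lemma hop_pair: "hop e E j (m, as) = (m, snd (hop e E j (m, as)))"
  by (simp add: hop_def)

lemma hopc_rel:
  fixes u :: "'m::ab_group_add \<times> 'a::ab_group_add list \<Rightarrow> 'k::field"
  assumes eadd: "\<And>x y. e (x + y) = e x + e y" and esm: "\<And>c x. e (smA c x) = smA c (e x)"
    and u: "u \<in> kspan (hrelgens smA smM k)"
  shows "hopc e E u \<in> kspan (hrelgens smA smM (Suc k))"
  unfolding hopc_def
proof (rule kspan_Lin[OF u])
  fix g assume g: "g \<in> hrelgens smA smM k"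
  then show "fin g" using hrelgens_hchains hchains_fin by blast
  let ?R = "hrelgens smA smM (Suc k) :: ('m \<times> 'a list \<Rightarrow> 'k) set"
  define L where "L j as = map e (take j as) @ E # drop j as" for j and as :: "'a list"
  have Lm: "hop e E j (m, as) = (m, L j as)" for j m as by (simp add: hop_def L_def)
  have lenL: "length (L j as) = Suc (length as)" for j as by (simp add: L_def)
  show "Lin (Gh e E) g \<in> kspan ?R"
    using g[unfolded hrelgens_def]
  proof (elim UnE CollectE exE conjE)
    fix m m' as assume h: "length as = k" "g = (\<lambda>s. gen (m + m', as) s - gen (m, as) s - gen (m', as) s)"
    have "Lin (Gh e E) g = (\<lambda>s. \<Sum>j\<in>{0..k}. (-1)^j *
        (gen (m + m', L j as) s - gen (m, L j as) s - gen (m', L j as) s))"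
      using h by (simp add: Lin_gen3 Gh_def Lm sum_subtractf right_diff_distrib)
    also have "\<dots> \<in> kspan ?R"
    proof (rule kspan_sum[where u = "\<lambda>j s. gen (m + m', L j as) s - gen (m, L j as) s - gen (m', L j as) s"], simp)
      fix j assume "j \<in> {0..k}"
      show "(\<lambda>s. gen (m + m', L j as) s - gen (m, L j as) s - gen (m', L j as) s) \<in> kspan ?R"
        unfolding hrelgens_def
        by (rule kspan_gen, intro UnI1 CollectI exI[of _ m] exI[of _ m'] exI[of _ "L j as"]) (simp add: lenL h)
    qed
    finally show ?thesis .
  next
    fix c m as assume h: "length as = k" "g = (\<lambda>s. gen (smM c m, as) s - c * gen (m, as) s)"
    have "Lin (Gh e E) g = (\<lambda>s. \<Sum>j\<in>{0..k}. (-1)^j *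
        (gen (smM c m, L j as) s - c * gen (m, L j as) s))"
      using h by (simp add: Lin_gen2 Gh_def Lm sum_subtractf right_diff_distrib sum_distrib_left mult.left_commute)
    also have "\<dots> \<in> kspan ?R"
    proof (rule kspan_sum[where u = "\<lambda>j s. gen (smM c m, L j as) s - c * gen (m, L j as) s"], simp)
      fix j assume "j \<in> {0..k}"
      show "(\<lambda>s. gen (smM c m, L j as) s - c * gen (m, L j as) s) \<in> kspan ?R"
        unfolding hrelgens_def
        by (rule kspan_gen, intro UnI1 UnI2 CollectI exI[of _ c] exI[of _ m] exI[of _ "L j as"]) (simp add: lenL h)
    qed
    finally show ?thesis .
  next
    fix m as i x y assume h: "length as = k" "i < k" "g = (\<lambda>s. gen (m, as[i := x + y]) s - gen (m, as[i := x]) s - gen (m, as[i := y]) s)"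
    define i' where "i' j = (if i < j then i else Suc i)" for j
    define x' where "x' j = (if i < j then e x else x)" for j
    define y' where "y' j = (if i < j then e y else y)" for j
    have upd: "L j (as[i := v]) = (L j as)[i' j := (if i < j then e v else v)]" if "j \<le> k" for j v
      using hop_upd_lt[of i j as e E undefined v] hop_upd_ge[of j i as e E undefined v] that h
      unfolding i'_def by (auto simp: hop_def L_def)
    have "Lin (Gh e E) g = (\<lambda>s. \<Sum>j\<in>{0..k}. (-1)^j *
        (gen (m, (L j as)[i' j := x' j + y' j]) s - gen (m, (L j as)[i' j := x' j]) s - gen (m, (L j as)[i' j := y' j]) s))"
    proof -
      have "Lin (Gh e E) g = (\<lambda>s. \<Sum>j\<in>{0..k}. (-1)^j *
        (gen (m, L j (as[i := x + y])) s - gen (m, L j (as[i := x])) s - gen (m, L j (as[i := y])) s))"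
        using h by (simp add: Lin_gen3 Gh_def Lm sum_subtractf right_diff_distrib)
      also have "\<dots> = (\<lambda>s. \<Sum>j\<in>{0..k}. (-1)^j *
        (gen (m, (L j as)[i' j := x' j + y' j]) s - gen (m, (L j as)[i' j := x' j]) s - gen (m, (L j as)[i' j := y' j]) s))"
      proof (rule ext, rule sum.cong[OF refl])
        fix s j assume "j \<in> {0..k}"
        then have jk: "j \<le> k" by simp
        show "(-1)^j * (gen (m, L j (as[i := x + y])) s - gen (m, L j (as[i := x])) s - gen (m, L j (as[i := y])) s)
          = (-1)^j * (gen (m, (L j as)[i' j := x' j + y' j]) s - gen (m, (L j as)[i' j := x' j]) s - gen (m, (L j as)[i' j := y' j]) s)"
          by (cases "i < j") (simp_all add: upd[OF jk] x'_def y'_def eadd)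
      qed
      finally show ?thesis .
    qed
    also have "\<dots> \<in> kspan ?R"
    proof (rule kspan_sum[where u = "\<lambda>j s. gen (m, (L j as)[i' j := x' j + y' j]) s - gen (m, (L j as)[i' j := x' j]) s - gen (m, (L j as)[i' j := y' j]) s"], simp)
      fix j assume "j \<in> {0..k}"
      have ilt: "i' j < Suc k" using h unfolding i'_def by auto
      show "(\<lambda>s. gen (m, (L j as)[i' j := x' j + y' j]) s - gen (m, (L j as)[i' j := x' j]) s - gen (m, (L j as)[i' j := y' j]) s) \<in> kspan ?R"
        unfolding hrelgens_def
        by (rule kspan_gen, intro UnI1 UnI2 CollectI exI[of _ m] exI[of _ "L j as"] exI[of _ "i' j"] exI[of _ "x' j"] exI[of _ "y' j"]) (simp add: lenL h ilt)
    qed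
    finally show ?thesis .
  next
    fix m as i c x assume h: "length as = k" "i < k" "g = (\<lambda>s. gen (m, as[i := smA c x]) s - c * gen (m, as[i := x]) s)"
    define i' where "i' j = (if i < j then i else Suc i)" for j
    define x' where "x' j = (if i < j then e x else x)" for j
    have upd: "L j (as[i := v]) = (L j as)[i' j := (if i < j then e v else v)]" if "j \<le> k" for j v
      using hop_upd_lt[of i j as e E undefined v] hop_upd_ge[of j i as e E undefined v] that h
      unfolding i'_def by (auto simp: hop_def L_def)
    have "Lin (Gh e E) g = (\<lambda>s. \<Sum>j\<in>{0..k}. (-1)^j *
        (gen (m, (L j as)[i' j := smA c (x' j)]) s - c * gen (m, (L j as)[i' j := x' j]) s))"
    proof -
      have "Lin (Gh e E) g = (\<lambda>s. \<Sum>j\<in>{0..k}. (-1)^j *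
        (gen (m, L j (as[i := smA c x])) s - c * gen (m, L j (as[i := x])) s))"
        using h by (simp add: Lin_gen2 Gh_def Lm sum_subtractf right_diff_distrib sum_distrib_left mult.left_commute)
      also have "\<dots> = (\<lambda>s. \<Sum>j\<in>{0..k}. (-1)^j *
        (gen (m, (L j as)[i' j := smA c (x' j)]) s - c * gen (m, (L j as)[i' j := x' j]) s))"
      proof (rule ext, rule sum.cong[OF refl])
        fix s j assume "j \<in> {0..k}"
        then have jk: "j \<le> k" by simp
        show "(-1)^j * (gen (m, L j (as[i := smA c x])) s - c * gen (m, L j (as[i := x])) s)
          = (-1)^j * (gen (m, (L j as)[i' j := smA c (x' j)]) s - c * gen (m, (L j as)[i' j := x' j]) s)"
          by (cases "i < j") (simp_all add: upd[OF jk] x'_def esm)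
      qed
      finally show ?thesis .
    qed
    also have "\<dots> \<in> kspan ?R"
    proof (rule kspan_sum[where u = "\<lambda>j s. gen (m, (L j as)[i' j := smA c (x' j)]) s - c * gen (m, (L j as)[i' j := x' j]) s"], simp)
      fix j assume "j \<in> {0..k}"
      have ilt: "i' j < Suc k" using h unfolding i'_def by auto
      show "(\<lambda>s. gen (m, (L j as)[i' j := smA c (x' j)]) s - c * gen (m, (L j as)[i' j := x' j]) s) \<in> kspan ?R"
        unfolding hrelgens_def
        by (rule kspan_gen, intro UnI2 CollectI exI[of _ m] exI[of _ "L j as"] exI[of _ "i' j"] exI[of _ c] exI[of _ "x' j"]) (simp add: lenL h ilt)
    qed
    finally show ?thesis .
  qed
qed


context simp_ids
begin

lemma htpy_gen:
  "gen (m, as) = (\<lambda>s. mapc e (gen (m, as)) s + (hbd mul l r (hopc e E (gen (m, as))) s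
      + hopc e E (hbd mul l r (gen (m, as))) s) :: 'k::field)"
proof (rule ext)
  fix s
  define n where "n = length as"
  define D where "D i j = (gen (fc i (hp j (m, as))) s :: 'k)" for i j
  define Ee where "Ee i j = (gen (hp j (fc i (m, as))) s :: 'k)" for i j
  have T1: "hbd mul l r (hopc e E (gen (m, as))) s = (\<Sum>j\<in>{0..n}. (-1)^j * (\<Sum>i\<in>{0..n+1}. (-1)^i * D i j))"
  proof -
    have "hbd mul l r (hopc e E (gen (m, as))) = hbd mul l r (\<lambda>s. \<Sum>j\<in>{0..n}. (-1)^j * gen (hp j (m, as)) s)"
      by (simp add: hopc_gen Gh_def n_def)
    also have "\<dots> = (\<lambda>s. \<Sum>j\<in>{0..n}. (-1)^j * hbgen mul l r (hp j (m, as)) s)"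
      unfolding hbd_Lin by (subst Lin_sum) (auto simp: fin_gen Lin_gen)
    finally have "hbd mul l r (hopc e E (gen (m, as))) s = (\<Sum>j\<in>{0..n}. (-1)^j * hbgen mul l r (hp j (m, as)) s)"
      by (rule fun_cong)
    also have "\<dots> = (\<Sum>j\<in>{0..n}. (-1)^j * (\<Sum>i\<in>{0..n+1}. (-1)^i * D i j))"
    proof (rule sum.cong[OF refl])
      fix j assume "j \<in> {0..n}"
      obtain L where hpL: "hp j (m, as) = (m, L)" by (simp add: hop_def)
      have ne: "L \<noteq> []" using hpL by (auto simp: hop_def)
      have len: "length L = n + 1" using hpL by (auto simp: hop_def n_def)
      have "hbgen mul l r (hp j (m, as)) s = (\<Sum>i\<in>{0..n+1}. (-1)^i * D i j)"
        unfolding D_def hpL hbgen_face[OF ne] len ..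
      then show "(-1)^j * hbgen mul l r (hp j (m, as)) s = (-1)^j * (\<Sum>i\<in>{0..n+1}. (-1)^i * D i j)"
        by simp
    qed
    finally show ?thesis .
  qed
  have T2: "hopc e E (hbd mul l r (gen (m, as))) s = (\<Sum>i\<in>{0..n}. (-1)^i * (\<Sum>j\<in>{0..<n}. (-1)^j * Ee i j))"
  proof (cases "as = []")
    case True
    then show ?thesis by (simp add: hbd_gen hbgen_nil hopc_zero n_def)
  next
    case False
    have "hopc e E (hbd mul l r (gen (m, as))) = hopc e E (\<lambda>s. \<Sum>i\<in>{0..n}. (-1)^i * gen (fc i (m, as)) s)"
      by (simp add: hbd_gen hbgen_face[OF False] n_def)
    also have "\<dots> = (\<lambda>s. \<Sum>i\<in>{0..n}. (-1)^i * Gh e E (fc i (m, as)) s)"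
      unfolding hopc_def by (subst Lin_sum) (auto simp: fin_gen Lin_gen)
    finally have "hopc e E (hbd mul l r (gen (m, as))) s = (\<Sum>i\<in>{0..n}. (-1)^i * Gh e E (fc i (m, as)) s)"
      by (rule fun_cong)
    also have "\<dots> = (\<Sum>i\<in>{0..n}. (-1)^i * (\<Sum>j\<in>{0..<n}. (-1)^j * Ee i j))"
    proof (rule sum.cong[OF refl])
      fix i assume "i \<in> {0..n}"
      then have "length (snd (fc i (m, as))) = n - 1" using length_face[OF False] n_def by simp
      moreover have "{0..n - 1} = {0..<n}" using False n_def by (cases n) auto
      ultimately show "(-1)^i * Gh e E (fc i (m, as)) s = (-1)^i * (\<Sum>j\<in>{0..<n}. (-1)^j * Ee i j)"
        unfolding Gh_def Ee_def by simp
    qed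
    finally show ?thesis .
  qed
  have comb: "(\<Sum>j\<in>{0..n}. (-1)^j * (\<Sum>i\<in>{0..n+1}. (-1)^i * D i j))
       + (\<Sum>i\<in>{0..n}. (-1)^i * (\<Sum>j\<in>{0..<n}. (-1)^j * Ee i j)) = D 0 0 - D (n+1) n"
  proof (rule simplicial_comb)
    fix i j assume "i < j" "j \<le> n"
    then show "D i j = Ee i (j - 1)" unfolding D_def Ee_def using id_a[of as n i j m] n_def by simp
  next
    fix i j assume "j + 1 < i" "i \<le> n + 1"
    then show "D i j = Ee (i - 1) j" unfolding D_def Ee_def using id_b[of as n j i m] n_def by simp
  next
    fix i assume "1 \<le> i" "i \<le> n"
    then show "D i i = D i (i - 1)" unfolding D_def using id_c[of as n i m] n_def by simp
  qed
  have d00: "D 0 0 = gen (m, as) s" unfolding D_def by (simp add: id_d)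
  have dn: "D (n+1) n = gen (m, map e as) s" unfolding D_def using id_e[of as n m] n_def by simp
  show "(gen (m, as) s :: 'k) = mapc e (gen (m, as)) s + (hbd mul l r (hopc e E (gen (m, as))) s
      + hopc e E (hbd mul l r (gen (m, as))) s)"
  proof -
    have h: "hbd mul l r (hopc e E (gen (m, as))) s + hopc e E (hbd mul l r (gen (m, as))) s
        = (gen (m, as) s - gen (m, map e as) s :: 'k)"
      by (simp only: T1 T2 comb d00 dn)
    have mg: "mapc e (gen (m, as)) s = (gen (m, map e as) s :: 'k)" by (simp add: mapc_gen)
    show ?thesis unfolding mg using h by (simp add: algebra_simps)
  qed
qed

lemma htpy:
  fixes x :: "'m \<times> 'a list \<Rightarrow> 'k::field"
  assumes "fin x"
  shows "x = (\<lambda>s. mapc e x s + (hbd mul l r (hopc e E x) s + hopc e E (hbd mul l r x) s))"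
  using assms
proof (induction x rule: fin_induct)
  case zero
  then show ?case by (simp add: mapc_def Lin_zero hopc_zero hbd_zero)
next
  case (step x c t)
  obtain m as where t: "t = (m, as)" by (cases t)
  have fx: "fin x" by fact
  have e1: "mapc e (\<lambda>s. c * gen t s + x s) = (\<lambda>s. c * mapc e (gen t) s + mapc e x s)"
    by (rule mapc_lin[OF fin_gen fx])
  have e2: "hopc e E (\<lambda>s. c * gen t s + x s) = (\<lambda>s. c * hopc e E (gen t) s + hopc e E x s)"
    by (rule hopc_lin[OF fin_gen fx])
  have e3: "hbd mul l r (\<lambda>s. c * hopc e E (gen t) s + hopc e E x s)
      = (\<lambda>s. c * hbd mul l r (hopc e E (gen t)) s + hbd mul l r (hopc e E x) s)"
    by (rule hbd_lin[OF hopc_fin[OF fin_gen] hopc_fin[OF fx]])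
  have e4: "hbd mul l r (\<lambda>s. c * gen t s + x s) = (\<lambda>s. c * hbd mul l r (gen t) s + hbd mul l r x s)"
    by (rule hbd_lin[OF fin_gen fx])
  have e5: "hopc e E (\<lambda>s. c * hbd mul l r (gen t) s + hbd mul l r x s)
      = (\<lambda>s. c * hopc e E (hbd mul l r (gen t)) s + hopc e E (hbd mul l r x) s)"
    by (rule hopc_lin[OF fin_hbd[OF fin_gen] fin_hbd[OF fx]])
  have g: "gen t = (\<lambda>s. mapc e (gen t) s + (hbd mul l r (hopc e E (gen t)) s + hopc e E (hbd mul l r (gen t)) s))"
    unfolding t by (rule htpy_gen)
  have ih: "x = (\<lambda>s. mapc e x s + (hbd mul l r (hopc e E x) s + hopc e E (hbd mul l r x) s))" by fact
  show ?case
    unfolding e1 e2 e3 e4 e5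
  proof (rule ext)
    fix s
    have a1: "gen t s = mapc e (gen t) s + (hbd mul l r (hopc e E (gen t)) s + hopc e E (hbd mul l r (gen t)) s)"
      using g by (rule fun_cong)
    have a2: "x s = mapc e x s + (hbd mul l r (hopc e E x) s + hopc e E (hbd mul l r x) s)"
      using ih by (rule fun_cong)
    show "c * gen t s + x s = c * mapc e (gen t) s + mapc e x s +
          (c * hbd mul l r (hopc e E (gen t)) s + hbd mul l r (hopc e E x) s +
           (c * hopc e E (hbd mul l r (gen t)) s + hopc e E (hbd mul l r x) s))"
      apply (subst a1)
      apply (subst a2)
      by (simp add: algebra_simps)
  qed
qed

end


theorem proposition1p2:
  fixes smP :: "'k::field \<Rightarrow> 'p::ab_group_add \<Rightarrow> 'p"
    and mulP :: "'p \<Rightarrow> 'p \<Rightarrow> 'p" and oneP :: 'p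
    and smQ :: "'k \<Rightarrow> 'q::ab_group_add \<Rightarrow> 'q"
    and mulQ :: "'q \<Rightarrow> 'q \<Rightarrow> 'q" and oneQ :: 'q
    and phi :: "'q \<Rightarrow> 'p"
    and smM :: "'k \<Rightarrow> 'm::ab_group_add \<Rightarrow> 'm"
    and lP :: "'p \<Rightarrow> 'm \<Rightarrow> 'm" and rP :: "'m \<Rightarrow> 'p \<Rightarrow> 'm"
    and n :: nat
  assumes "k_algebra smP mulP oneP"
    and "k_algebra smQ mulQ oneQ"
    and "alg_hom smQ mulQ oneQ smP mulP oneP phi"
    and "k_bimodule smP mulP oneP smM lP rP"
  shows "hochschild_iso
           (cyl_smul smP smQ) (cyl_mul phi mulP mulQ) smM (cyl_lact phi lP) (cyl_ract phi rP)
           smP mulP smM lP rP n"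
proof -
  have vsP: "vector_space smP" and Pdl: "\<And>x y z. mulP x (y + z) = mulP x y + mulP x z"
    and Pdr: "\<And>x y z. mulP (x + y) z = mulP x z + mulP y z"
    and Pone: "\<And>x. mulP x oneP = x" "\<And>x. mulP oneP x = x"
    using assms(1) unfolding k_algebra_def by auto
  have Qdl: "\<And>x y z. mulQ x (y + z) = mulQ x y + mulQ x z"
    and Qdr: "\<And>x y z. mulQ (x + y) z = mulQ x z + mulQ y z" and vsQ: "vector_space smQ"
    using assms(2) unfolding k_algebra_def by auto
  have padd: "\<And>x y. phi (x + y) = phi x + phi y" and psm: "\<And>c x. phi (smQ c x) = smP c (phi x)"
    and pmul: "\<And>x y. phi (mulQ x y) = mulP (phi x) (phi y)"
    using assms(3) unfolding alg_hom_def by auto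
  have radd: "\<And>a b m. rP m (a + b) = rP m a + rP m b" and ladd: "\<And>a b m. lP (a + b) m = lP a m + lP b m"
    and rone: "\<And>m. rP m oneP = m" and lone: "\<And>m. lP oneP m = m"
    using assms(4) unfolding k_bimodule_def by auto
  interpret Pv: vector_space smP by (rule vsP)
  interpret Qv: vector_space smQ by (rule vsQ)
  have phi0: "phi 0 = 0" using padd[of 0 0] by simp
  have mP0r: "mulP a 0 = 0" for a using Pdl[of a 0 0] by simp
  have mP0l: "mulP 0 a = 0" for a using Pdr[of 0 0 a] by simp
  have mQ0l: "mulQ 0 a = 0" for a using Qdr[of 0 0 a] by simp
  define pi :: "'p \<times> 'q \<Rightarrow> 'p" where "pi z = fst z + phi (snd z)" for z
  define jj :: "'p \<Rightarrow> 'p \<times> 'q" where "jj p = (p, 0)" for p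
  define ee :: "'p \<times> 'q \<Rightarrow> 'p \<times> 'q" where "ee z = (fst z + phi (snd z), 0)" for z
  define EE :: "'p \<times> 'q" where "EE = (oneP, 0)"
  let ?mulZ = "cyl_mul phi mulP mulQ" and ?lZ = "cyl_lact phi lP" and ?rZ = "cyl_ract phi rP"
    and ?smZ = "cyl_smul smP smQ"
  have F1: "?rZ m z = rP m (pi z)" for m z
    by (cases z) (simp add: cyl_ract_def pi_def radd)
  have F2: "?lZ z m = lP (pi z) m" for m z
    by (cases z) (simp add: cyl_lact_def pi_def ladd)
  have F3: "pi (?mulZ a b) = mulP (pi a) (pi b)" for a b
    by (cases a, cases b) (simp add: cyl_mul_def pi_def Pdl Pdr pmul padd add_ac)
  have F4: "pi (a + b) = pi a + pi b" for a b
    by (cases a, cases b) (simp add: pi_def padd add_ac)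
  have F5: "pi (?smZ c a) = smP c (pi a)" for c a
    by (cases a) (simp add: cyl_smul_def pi_def psm Pv.scale_right_distrib)
  have F6: "pi (jj p) = p" for p by (simp add: pi_def jj_def phi0)
  have F7: "?mulZ (jj a) (jj b) = jj (mulP a b)" for a b
    by (simp add: cyl_mul_def jj_def phi0 mP0r mP0l mQ0l)
  have F8: "jj (a + b) = jj a + jj b" for a b by (simp add: jj_def)
  have F9: "jj (smP c a) = ?smZ c (jj a)" for c a by (simp add: jj_def cyl_smul_def)
  have eejj: "ee z = jj (pi z)" for z by (simp add: ee_def jj_def pi_def)
  have EEjj: "EE = jj oneP" by (simp add: EE_def jj_def)
  have ee_add: "ee (x + y) = ee x + ee y" for x y by (simp add: eejj F4 F8)
  have ee_sm: "ee (?smZ c x) = ?smZ c (ee x)" for c x by (simp add: eejj F5 F9)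
  interpret S: simp_ids ?mulZ ?lZ ?rZ ee EE
  proof
    show "ee (?mulZ a b) = ?mulZ (ee a) (ee b)" for a b by (simp add: eejj F3 F7)
    show "?mulZ (ee a) EE = ee a" for a by (simp add: eejj EEjj F7 Pone)
    show "?mulZ EE a = ee a" for a
      by (cases a) (simp add: EE_def ee_def cyl_mul_def Pone phi0 mP0l mQ0l)
    show "?rZ m (ee a) = ?rZ m a" for m a by (simp add: F1 eejj F6)
    show "?rZ m EE = m" for m by (simp add: F1 EEjj F6 rone)
    show "?lZ EE m = m" for m by (simp add: F2 EEjj F6 lone)
  qed
  have jjpi: "jj \<circ> pi = ee" by (simp add: fun_eq_iff eejj)
  show ?thesis
  proof (rule iso_crit[where Pi = "mapc pi" and Jm = "mapc jj" and H = "hopc ee EE"])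
    show "mapc pi x \<in> hchains k" if "x \<in> hchains k" for x :: "'m \<times> ('p \<times> 'q) list \<Rightarrow> 'k" and k
      using that by (rule mapc_ch)
    show "mapc pi (\<lambda>s. c * x s + y s) = (\<lambda>s. c * mapc pi x s + mapc pi y s)"
      if "x \<in> hchains k" "y \<in> hchains k" for x y :: "'m \<times> ('p \<times> 'q) list \<Rightarrow> 'k" and k c
      using that by (intro mapc_lin) (auto intro: hchains_fin)
    show "mapc pi u \<in> kspan (hrelgens smP smM k)" if "u \<in> kspan (hrelgens ?smZ smM k)" for u :: "'m \<times> ('p \<times> 'q) list \<Rightarrow> 'k" and k
      by (rule mapc_rel[OF F4 F5 that])
    show "mapc pi (hbd ?mulZ ?lZ ?rZ x) = hbd mulP lP rP (mapc pi x)"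
      if "x \<in> hchains k" for x :: "'m \<times> ('p \<times> 'q) list \<Rightarrow> 'k" and k
      by (rule mapc_bd[where f=pi and mulA="?mulZ" and mulB=mulP and ra="?rZ" and rb=rP and la="?lZ" and lb=lP,
            OF F3 F1[symmetric] F2[symmetric] hchains_fin[OF that]])
    show "mapc jj x \<in> hchains k" if "x \<in> hchains k" for x :: "'m \<times> 'p list \<Rightarrow> 'k" and k
      using that by (rule mapc_ch)
    show "mapc jj (\<lambda>s. c * x s + y s) = (\<lambda>s. c * mapc jj x s + mapc jj y s)"
      if "x \<in> hchains k" "y \<in> hchains k" for x y :: "'m \<times> 'p list \<Rightarrow> 'k" and k c
      using that by (intro mapc_lin) (auto intro: hchains_fin)
    show "mapc jj u \<in> kspan (hrelgens ?smZ smM k)" if "u \<in> kspan (hrelgens smP smM k)" for u :: "'m \<times> 'p list \<Rightarrow> 'k" and k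
      by (rule mapc_rel[OF F8 F9 that])
    have jr: "?rZ m (jj a) = rP m a" for m a by (simp add: F1 F6)
    have jl: "?lZ (jj a) m = lP a m" for m a by (simp add: F2 F6)
    show "mapc jj (hbd mulP lP rP x) = hbd ?mulZ ?lZ ?rZ (mapc jj x)"
      if "x \<in> hchains k" for x :: "'m \<times> 'p list \<Rightarrow> 'k" and k
      by (rule mapc_bd[where f=jj and mulA=mulP and mulB="?mulZ" and ra=rP and rb="?rZ" and la=lP and lb="?lZ",
            OF F7[symmetric] jr jl hchains_fin[OF that]])
    show "mapc pi (mapc jj y) = y" if "y \<in> hchains k" for y :: "'m \<times> 'p list \<Rightarrow> 'k" and k
      using hchains_fin[OF that] by (simp add: mapc_comp mapc_id F6)
    show "hopc ee EE x \<in> hchains (Suc k)" if "x \<in> hchains k" for x :: "'m \<times> ('p \<times> 'q) list \<Rightarrow> 'k" and k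
      using that by (rule hopc_ch)
    show "hopc ee EE (\<lambda>s. 0) = (\<lambda>s. 0 :: 'k)" by (rule hopc_zero)
    show "hopc ee EE u \<in> kspan (hrelgens ?smZ smM (Suc k))" if "u \<in> kspan (hrelgens ?smZ smM k)" for u :: "'m \<times> ('p \<times> 'q) list \<Rightarrow> 'k" and k
      by (rule hopc_rel[OF ee_add ee_sm that])
    show "x = (\<lambda>s. mapc jj (mapc pi x) s + (hbd ?mulZ ?lZ ?rZ (hopc ee EE x) s + hopc ee EE (hbd ?mulZ ?lZ ?rZ x) s))"
      if "x \<in> hchains k" for x :: "'m \<times> ('p \<times> 'q) list \<Rightarrow> 'k" and k
    proof -
      have fx: "fin x" using that by (rule hchains_fin)
      have "mapc jj (mapc pi x) = mapc ee x" using mapc_comp[OF fx, of jj pi] jjpi by simp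
      then show ?thesis using S.htpy[OF fx] by simp
    qed
  qed
qed


end
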